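(* Let $\mathcal{F}_1,\ldots,\mathcal{F}_n$ be finite families of convex subsets of $\mathbb{R}^d$. If $\bigcap\mathcal{F}_i=\emptyset$ for all $i\in[n]$ and $n\ge d+2$, then $\mathbf{RG}_{\mathrm{CH}}(\mathcal{F}_1,\ldots,\mathcal{F}_n)$ is connected.
   Context: $\mathbf{RG}_{\mathrm{CH}}(\mathcal{F}_1,\ldots,\mathcal{F}_n)$ is the graph whose vertices are the ordered tuples $(C_1,\ldots,C_n)$ with $C_i\in\mathcal{F}_i$ for all $i$ and $\bigcap_{i=1}^n C_i=\emptyset$; two tuples $(C_1,\ldots,C_n)$ and $(D_1,\ldots,D_n)$ are adjacent if there is a unique index $j$ with $C_j\neq D_j$ and moreover $\bigcap_{i\neq j}C_i=\emptyset$. *)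

theory Defs
  imports "HOL-Analysis.Analysis"
begin

text \<open>Families F 0, ..., F (n-1); a tuple (C_1,...,C_n) is a list of length n.\<close>

definition rg_vertex :: "nat \<Rightarrow> (nat \<Rightarrow> 'a set set) \<Rightarrow> 'a set list \<Rightarrow> bool" where
  "rg_vertex n F C \<longleftrightarrow> length C = n \<and> (\<forall>i<n. C ! i \<in> F i) \<and> (\<Inter>i\<in>{..<n}. C ! i) = {}"

definition rg_adj :: "nat \<Rightarrow> (nat \<Rightarrow> 'a set set) \<Rightarrow> 'a set list \<Rightarrow> 'a set list \<Rightarrow> bool" where
  "rg_adj n F C D \<longleftrightarrow> rg_vertex n F C \<and> rg_vertex n F D \<and>
     (\<exists>!j. j < n \<and> C ! j \<noteq> D ! j) \<and>
     (\<forall>j<n. C ! j \<noteq> D ! j \<longrightarrow> (\<Inter>i\<in>{..<n} - {j}. C ! i) = {})"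

definition rg_connected :: "nat \<Rightarrow> (nat \<Rightarrow> 'a set set) \<Rightarrow> bool" where
  "rg_connected n F \<longleftrightarrow> (\<forall>C D. rg_vertex n F C \<and> rg_vertex n F D \<longrightarrow> (rg_adj n F)\<^sup>*\<^sup>* C D)"

end

theory Submission
  imports Defs
begin

lemma aff_dep_big:
  fixes B :: "'a::euclidean_space set"
  assumes "finite B" "B \<subseteq> S" "aff_dim S \<le> int e" "card B \<ge> e + 2"
  shows "affine_dependent B"
proof (rule ccontr)
  assume "\<not> affine_dependent B"
  then have "of_nat (card B) = aff_dim B + 1" by (rule aff_dim_affine_independent)
  moreover have "aff_dim B \<le> aff_dim S" using assms(2) by (rule aff_dim_subset)
  ultimately show False using assms(3,4) by linarith
qed

lemma Helly_aff_induct: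
  fixes \<F> :: "'a::euclidean_space set set"
  assumes "card \<F> = n"
    and "n \<ge> e + 1" and "aff_dim S \<le> int e"
    and "\<forall>T\<in>\<F>. convex T \<and> T \<subseteq> S" "\<forall>T\<subseteq>\<F>. card T = e + 1 \<longrightarrow> \<Inter>T \<noteq> {}"
  shows "\<Inter>\<F> \<noteq> {}"
  using assms
proof (induction n arbitrary: \<F>)
  case 0
  then show ?case by auto
next
  case (Suc n)
  have "finite \<F>"
    using \<open>card \<F> = Suc n\<close> by (auto intro: card_ge_0_finite)
  show "\<Inter>\<F> \<noteq> {}"
  proof (cases "n = e")
    case True
    then show ?thesis
      by (simp add: Suc.prems)
  next
    case False
    have "\<Inter>(\<F> - {T}) \<noteq> {}" if "T \<in> \<F>" for T
    proof (rule Suc.IH[rule_format])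
      show "card (\<F> - {T}) = n"
        by (simp add: Suc.prems(1) \<open>finite \<F>\<close> that)
      show "e + 1 \<le> n"
        using False Suc.prems(2) by linarith
      show "\<And>t. \<lbrakk>t \<subseteq> \<F> - {T}; card t = e + 1\<rbrakk> \<Longrightarrow> \<Inter>t \<noteq> {}"
        by (simp add: Suc.prems(5) subset_Diff_insert)
    qed (use Suc in auto)
    then have "\<forall>T\<in>\<F>. \<exists>x. x \<in> \<Inter>(\<F> - {T})"
      by blast
    then obtain X where X: "\<And>T. T\<in>\<F> \<Longrightarrow> X T \<in> \<Inter>(\<F> - {T})"
      by metis
    have XS: "X T \<in> S" if "T \<in> \<F>" for T
    proof -
      have "card (\<F> - {T}) = n" by (simp add: Suc.prems(1) \<open>finite \<F>\<close> that)
      moreover have "n \<noteq> 0" using False Suc.prems(2) by auto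
      ultimately have "\<F> - {T} \<noteq> {}" by (metis card.empty)
      then obtain U where "U \<in> \<F> - {T}" by blast
      then show ?thesis using X[OF that] Suc.prems(4) by blast
    qed
    show ?thesis
    proof (cases "inj_on X \<F>")
      case False
      then obtain S T where "S\<noteq>T" and st: "S\<in>\<F>" "T\<in>\<F>" "X S = X T"
        unfolding inj_on_def by auto
      then have *: "\<Inter>\<F> = \<Inter>(\<F> - {S}) \<inter> \<Inter>(\<F> - {T})" by auto
      show ?thesis
        by (metis "*" X disjoint_iff_not_equal st)
    next
      case True
      have dep: "affine_dependent (X ` \<F>)"
        apply (rule aff_dep_big[where S=S and e=e])
        using \<open>finite \<F>\<close> XS Suc.prems(3) card_image[OF True] \<open>card \<F> = Suc n\<close> False Suc.prems(2)
        by auto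
      then obtain M P where mp: "M \<inter> P = {}" "M \<union> P = X ` \<F>" "convex hull M \<inter> convex hull P \<noteq> {}"
        using Radon_partition[of "X ` \<F>"] \<open>finite \<F>\<close> by auto
      have "M \<subseteq> X ` \<F>" "P \<subseteq> X ` \<F>"
        using mp(2) by auto
      then obtain \<G> \<H> where gh:"M = X ` \<G>" "P = X ` \<H>" "\<G> \<subseteq> \<F>" "\<H> \<subseteq> \<F>"
        unfolding subset_image_iff by auto
      then have "\<F> \<union> (\<G> \<union> \<H>) = \<F>" by auto
      then have \<F>: "\<F> = \<G> \<union> \<H>"
        using inj_on_Un_image_eq_iff[of X \<F> "\<G> \<union> \<H>"] and True
        unfolding mp(2)[unfolded image_Un[symmetric] gh]
        by auto
      have *: "\<G> \<inter> \<H> = {}"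
        using gh local.mp(1) by blast
      have "convex hull (X ` \<H>) \<subseteq> \<Inter>\<G>" "convex hull (X ` \<G>) \<subseteq> \<Inter>\<H>"
        by (rule hull_minimal; use X * \<F> Suc.prems(4) in \<open>auto simp: convex_Inter\<close>)+
      then show ?thesis
        unfolding \<F> using mp(3)[unfolded gh] by blast
    qed
  qed 
qed

lemma Helly_aff_idx:
  fixes Z :: "'i \<Rightarrow> 'a::euclidean_space set"
  assumes "finite I" "aff_dim S \<le> int e" "\<forall>i\<in>I. convex (Z i) \<and> Z i \<subseteq> S"
    and "(\<Inter>i\<in>I. Z i) = {}"
  shows "\<exists>J\<subseteq>I. card J \<le> e + 1 \<and> (\<Inter>i\<in>J. Z i) = {}"
proof (rule ccontr)
  assume H: "\<not> ?thesis"
  show False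
  proof (cases "card (Z ` I) \<le> e + 1")
    case True
    obtain J where J: "J \<subseteq> I" "inj_on Z J" "Z ` I = Z ` J"
      using subset_image_inj[of "Z ` I" Z I] by auto
    have "card J \<le> e + 1" using True J card_image by metis
    then have "(\<Inter>i\<in>J. Z i) \<noteq> {}" using H J(1) by blast
    moreover have "(\<Inter>i\<in>J. Z i) = (\<Inter>i\<in>I. Z i)" using J(3) by (metis)
    ultimately show False using assms(4) by simp
  next
    case False
    have "\<Inter>(Z ` I) \<noteq> {}"
    proof (rule Helly_aff_induct[where S=S and e=e])
      show "card (Z ` I) = card (Z ` I)" ..
      show "e + 1 \<le> card (Z ` I)" using False by simp
      show "aff_dim S \<le> int e" by fact
      show "\<forall>T\<in>Z ` I. convex T \<and> T \<subseteq> S" using assms(3) by auto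
      show "\<forall>T\<subseteq>Z ` I. card T = e + 1 \<longrightarrow> \<Inter> T \<noteq> {}"
      proof (intro allI impI)
        fix T assume T: "T \<subseteq> Z ` I" "card T = e + 1"
        obtain J where J: "J \<subseteq> I" "inj_on Z J" "T = Z ` J"
          using subset_image_inj[of T Z I] T(1) by auto
        have "card J = e + 1" using T(2) J card_image by metis
        then have "(\<Inter>i\<in>J. Z i) \<noteq> {}" using H J(1) by fastforce
        then show "\<Inter> T \<noteq> {}" using J(3) by simp
      qed
    qed
    then show False using assms(4) by simp
  qed
qed

definition sel :: "'c set \<Rightarrow> ('c \<Rightarrow> 'b set) \<Rightarrow> ('c \<Rightarrow> 'b option) \<Rightarrow> bool" where
  "sel Col L f \<longleftrightarrow> dom f \<subseteq> Col \<and> (\<forall>i y. f i = Some y \<longrightarrow> y \<in> L i)"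

definition Isec :: "('b \<Rightarrow> 'a set) \<Rightarrow> ('c \<Rightarrow> 'b option) \<Rightarrow> 'a set" where
  "Isec Y f = \<Inter> (Y ` ran f)"

definition Om :: "'c set \<Rightarrow> ('c \<Rightarrow> 'b set) \<Rightarrow> bool \<Rightarrow> ('c \<Rightarrow> 'b option) \<Rightarrow> bool" where
  "Om Col L pr f \<longleftrightarrow> sel Col L f \<and> (pr \<longrightarrow> dom f \<noteq> Col)"

definition cedge :: "('c \<Rightarrow> 'b option) set \<Rightarrow> ('c \<Rightarrow> 'b option) \<Rightarrow> ('c \<Rightarrow> 'b option) \<Rightarrow> bool" where
  "cedge P u v \<longleftrightarrow> u \<in> P \<and> v \<in> P \<and> (u \<subseteq>\<^sub>m v \<or> v \<subseteq>\<^sub>m u)"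

definition pconn :: "('c \<Rightarrow> 'b option) set \<Rightarrow> bool" where
  "pconn P \<longleftrightarrow> (\<forall>u\<in>P. \<forall>v\<in>P. (cedge P)\<^sup>*\<^sup>* u v)"

definition PP :: "'c set \<Rightarrow> ('c \<Rightarrow> 'b set) \<Rightarrow> ('b \<Rightarrow> 'a set) \<Rightarrow> bool \<Rightarrow> ('c \<Rightarrow> 'b option) set" where
  "PP Col L Y pr = {f. Om Col L pr f \<and> Isec Y f = {}}"

lemma cedge_sym: "cedge P u v \<Longrightarrow> cedge P v u"
  unfolding cedge_def by auto

lemma rtc_sym: "(cedge P)\<^sup>*\<^sup>* u v \<Longrightarrow> (cedge P)\<^sup>*\<^sup>* v u"
proof (induction rule: rtranclp_induct)
  case base then show ?case by simp
next
  case (step y z)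
  then show ?case using cedge_sym by (metis converse_rtranclp_into_rtranclp)
qed

lemma cedge_step: "u \<in> P \<Longrightarrow> v \<in> P \<Longrightarrow> u \<subseteq>\<^sub>m v \<Longrightarrow> (cedge P)\<^sup>*\<^sup>* u v"
  "u \<in> P \<Longrightarrow> v \<in> P \<Longrightarrow> v \<subseteq>\<^sub>m u \<Longrightarrow> (cedge P)\<^sup>*\<^sup>* u v"
  by (simp_all add: cedge_def r_into_rtranclp)

lemma ran_mono_le: assumes "f \<subseteq>\<^sub>m g" shows "ran f \<subseteq> ran g"
proof
  fix y assume "y \<in> ran f"
  then obtain x where "f x = Some y" unfolding ran_def by blast
  then have "g x = Some y" using assms unfolding map_le_def by (metis domI)
  then show "y \<in> ran g" unfolding ran_def by blast
qed

lemma Inter_anti: "f \<subseteq>\<^sub>m g \<Longrightarrow> Isec Y g \<subseteq> Isec Y f"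
  unfolding Isec_def using ran_mono_le by blast

lemma sel_le: "sel Col L g \<Longrightarrow> f \<subseteq>\<^sub>m g \<Longrightarrow> sel Col L f"
proof -
  assume a: "sel Col L g" "f \<subseteq>\<^sub>m g"
  have "dom f \<subseteq> dom g" using a(2) by (rule map_le_implies_dom_le)
  moreover have "f i = Some y \<Longrightarrow> g i = Some y" for i y using a(2) unfolding map_le_def by (metis domI)
  ultimately show ?thesis using a(1) unfolding sel_def by blast
qed

lemma sel_upd: "sel Col L f \<Longrightarrow> i \<in> Col \<Longrightarrow> y \<in> L i \<Longrightarrow> sel Col L (f(i \<mapsto> y))"
  unfolding sel_def by auto

lemma le_upd: "i \<notin> dom f \<Longrightarrow> f \<subseteq>\<^sub>m f(i \<mapsto> y)"
  unfolding map_le_def by auto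

lemma ran_upd_notin: "i \<notin> dom f \<Longrightarrow> ran (f(i \<mapsto> y)) = insert y (ran f)"
  by (simp add: ran_map_upd domIff)

lemma finite_sels:
  assumes "finite Col" "\<forall>i\<in>Col. finite (L i)"
  shows "finite {f. sel Col L f}"
proof -
  let ?Lab = "\<Union>(L ` Col)"
  have "{f. sel Col L f} \<subseteq> (\<Union>A\<in>Pow Col. {m. dom m = A \<and> ran m \<subseteq> ?Lab})"
  proof
    fix f assume "f \<in> {f. sel Col L f}"
    then have s: "sel Col L f" by simp
    have "ran f \<subseteq> ?Lab"
    proof
      fix y assume "y \<in> ran f"
      then obtain i where i: "f i = Some y" unfolding ran_def by blast
      then have "i \<in> Col" "y \<in> L i" using s unfolding sel_def by (auto simp: domI)
      then show "y \<in> ?Lab" by blast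
    qed
    moreover have "dom f \<in> Pow Col" using s unfolding sel_def by simp
    ultimately show "f \<in> (\<Union>A\<in>Pow Col. {m. dom m = A \<and> ran m \<subseteq> ?Lab})" by blast
  qed
  moreover have "finite (\<Union>A\<in>Pow Col. {m. dom m = A \<and> ran m \<subseteq> ?Lab})"
  proof (intro finite_UN_I)
    show "finite (Pow Col)" using assms by simp
    fix A assume "A \<in> Pow Col"
    then have "finite A" using assms(1) finite_subset by auto
    moreover have "finite ?Lab" using assms by auto
    ultimately show "finite {m. dom m = A \<and> ran m \<subseteq> ?Lab}" by (rule finite_set_of_finite_maps)
  qed
  ultimately show ?thesis by (rule finite_subset)
qed

lemma ran_finite_sel: "sel Col L f \<Longrightarrow> finite Col \<Longrightarrow> finite (ran f)"
  unfolding sel_def by (meson finite_ran finite_subset)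

definition keyf :: "('b \<Rightarrow> 'a::euclidean_space set) \<Rightarrow> 'a \<Rightarrow> ('c \<Rightarrow> 'b option) \<Rightarrow> 'a" where
  "keyf Y c f = closest_point (Isec Y f) c"

definition KSet where
  "KSet Col L Y c = {keyf Y c f | f. sel Col L f \<and> Isec Y f \<noteq> {}}"

definition NN where
  "NN Col L Y c K = {f. sel Col L f \<and> Isec Y f \<noteq> {} \<and> keyf Y c f \<in> K}"

definition Pn where
  "Pn Col L Y pr c K = {f. Om Col L pr f \<and> f \<notin> NN Col L Y c K}"

definition Dcl where
  "Dcl Col L Y c K \<longleftrightarrow> (\<forall>q\<in>K. \<forall>q'\<in>KSet Col L Y c. dist c q' < dist c q \<longrightarrow> q' \<in> K)"

definition hypG :: "'c set \<Rightarrow> ('c \<Rightarrow> 'b set) \<Rightarrow> ('b \<Rightarrow> 'a::euclidean_space set) \<Rightarrow> bool \<Rightarrow> 'a set \<Rightarrow> nat \<Rightarrow> bool" where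
  "hypG Col L Y pr S e \<longleftrightarrow> finite Col \<and> (\<forall>i\<in>Col. finite (L i) \<and> L i \<noteq> {}) \<and>
     (\<forall>i\<in>Col. \<forall>y\<in>L i. convex (Y y) \<and> Y y \<subseteq> S) \<and> affine S \<and> S \<noteq> {} \<and> aff_dim S \<le> int e \<and>
     (pr \<longrightarrow> e + 3 \<le> card Col \<and> (\<forall>i\<in>Col. \<exists>y. L i = {y})) \<and>
     (\<not> pr \<longrightarrow> e + 2 \<le> card Col \<and> (\<forall>i\<in>Col. \<Inter>(Y ` L i) = {}))"

locale stp =
  fixes Col :: "'c set" and L :: "'c \<Rightarrow> 'b set" and Y :: "'b \<Rightarrow> 'a::euclidean_space set"
    and pr :: bool and S :: "'a set" and e :: nat and c :: 'a and K :: "'a set" and q :: 'a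
  assumes fin: "finite Col" and Lfin: "\<forall>i\<in>Col. finite (L i) \<and> L i \<noteq> {}"
    and cvx: "\<forall>i\<in>Col. \<forall>y\<in>L i. convex (Y y) \<and> compact (Y y) \<and> Y y \<subseteq> S"
    and aff: "affine S" and cS: "c \<in> S" and dim: "aff_dim S \<le> int e"
    and hpr: "pr \<Longrightarrow> e + 3 \<le> card Col \<and> (\<forall>i\<in>Col. \<exists>y. L i = {y})"
    and hnpr: "\<not> pr \<Longrightarrow> e + 2 \<le> card Col \<and> (\<forall>i\<in>Col. \<Inter>(Y ` L i) = {})"
    and KS: "K \<subseteq> KSet Col L Y c" and D: "Dcl Col L Y c K" and qK: "q \<in> K"
    and qmax: "\<forall>q'\<in>K. dist c q' \<le> dist c q"
begin

abbreviation "r \<equiv> dist c q"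
abbreviation "tau f \<equiv> (\<forall>y\<in>ran f. q \<in> Y y)"
abbreviation "blk f \<equiv> Isec Y f \<inter> ball c r = {}"
abbreviation "NK \<equiv> NN Col L Y c K"
abbreviation "NK' \<equiv> NN Col L Y c (K - {q})"
abbreviation "PK \<equiv> Pn Col L Y pr c K"
abbreviation "PK' \<equiv> Pn Col L Y pr c (K - {q})"
abbreviation "R \<equiv> (cedge PK)\<^sup>*\<^sup>*"

lemma sel_lab: "sel Col L f \<Longrightarrow> y \<in> ran f \<Longrightarrow> \<exists>i\<in>Col. f i = Some y \<and> y \<in> L i"
  unfolding sel_def ran_def by (auto simp: domI)

lemma ran_dom: "ran g = (\<lambda>i. the (g i)) ` dom g"
proof
  show "ran g \<subseteq> (\<lambda>i. the (g i)) ` dom g" unfolding ran_def dom_def by force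
  show "(\<lambda>i. the (g i)) ` dom g \<subseteq> ran g" unfolding ran_def dom_def by force
qed

lemma lab_props: "sel Col L f \<Longrightarrow> y \<in> ran f \<Longrightarrow> convex (Y y) \<and> compact (Y y) \<and> Y y \<subseteq> S"
proof -
  assume "sel Col L f" "y \<in> ran f"
  then obtain i where "i \<in> Col" "y \<in> L i" using sel_lab by blast
  then show ?thesis using cvx by blast
qed

lemma Inter_closed: "sel Col L f \<Longrightarrow> closed (Isec Y f)"
  unfolding Isec_def by (rule closed_Inter) (use lab_props compact_imp_closed in blast)

lemma Inter_convex: "sel Col L f \<Longrightarrow> convex (Isec Y f)"
  unfolding Isec_def by (rule convex_Inter) (use lab_props in blast)

lemma key_in: "sel Col L f \<Longrightarrow> Isec Y f \<noteq> {} \<Longrightarrow> keyf Y c f \<in> Isec Y f"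
  unfolding keyf_def by (rule closest_point_in_set) (use Inter_closed in auto)

lemma key_le: "sel Col L f \<Longrightarrow> z \<in> Isec Y f \<Longrightarrow> dist c (keyf Y c f) \<le> dist c z"
  unfolding keyf_def by (rule closest_point_le) (use Inter_closed in auto)

lemma key_unique: "sel Col L f \<Longrightarrow> x \<in> Isec Y f \<Longrightarrow> (\<forall>z\<in>Isec Y f. dist c x \<le> dist c z) \<Longrightarrow> keyf Y c f = x"
  unfolding keyf_def by (rule closest_point_unique[symmetric]) (use Inter_closed Inter_convex in auto)

lemma tau_q: "tau f \<Longrightarrow> q \<in> Isec Y f"
  unfolding Isec_def by blast

lemma maxd: "f \<in> NK \<Longrightarrow> dist c (keyf Y c f) \<le> r"
  unfolding NN_def using qmax by blast

lemma blk_far: "blk f \<Longrightarrow> z \<in> Isec Y f \<Longrightarrow> r \<le> dist c z"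
  by (metis disjoint_iff mem_ball not_le)

lemma A_char:
  assumes "sel Col L f"
  shows "(f \<in> NK \<and> f \<notin> NK') \<longleftrightarrow> (tau f \<and> blk f)"
proof
  assume a: "f \<in> NK \<and> f \<notin> NK'"
  then have kq: "keyf Y c f = q" and ne: "Isec Y f \<noteq> {}" unfolding NN_def using assms by auto
  have qi: "q \<in> Isec Y f" using key_in[OF assms ne] kq by simp
  then have "tau f" unfolding Isec_def by blast
  moreover have "blk f"
  proof (rule ccontr)
    assume "\<not> blk f"
    then obtain z where "z \<in> Isec Y f" "dist c z < r" by (auto simp: mem_ball)
    then show False using key_le[OF assms, of z] kq by simp
  qed
  ultimately show "tau f \<and> blk f" by simp
next
  assume a: "tau f \<and> blk f"
  then have qi: "q \<in> Isec Y f" by (simp add: tau_q)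
  have "keyf Y c f = q" using key_unique[OF assms qi] blk_far a by blast
  then show "f \<in> NK \<and> f \<notin> NK'" unfolding NN_def using assms qi qK by auto
qed

lemma F1:
  assumes "sel Col L f" "\<beta> \<subseteq>\<^sub>m f" "tau \<beta>" "blk \<beta>" "\<not> tau f"
  shows "f \<notin> NK"
proof
  assume fN: "f \<in> NK"
  then have ne: "Isec Y f \<noteq> {}" unfolding NN_def by simp
  let ?k = "keyf Y c f"
  have sb: "sel Col L \<beta>" using sel_le assms by blast
  have kf: "?k \<in> Isec Y f" using key_in[OF assms(1) ne] .
  then have kb: "?k \<in> Isec Y \<beta>" using Inter_anti[OF assms(2), of Y] by blast
  have "r \<le> dist c ?k" using blk_far[OF assms(4) kb] .
  moreover have "dist c ?k \<le> r" using maxd[OF fN] .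
  ultimately have eq: "dist c ?k = r" by simp
  have qb: "q \<in> Isec Y \<beta>" using tau_q[OF assms(3)] .
  have m1: "\<forall>z\<in>Isec Y \<beta>. dist c q \<le> dist c z" using blk_far[OF assms(4)] by blast
  have m2: "\<forall>z\<in>Isec Y \<beta>. dist c ?k \<le> dist c z" using m1 eq by simp
  have "keyf Y c \<beta> = q" using key_unique[OF sb qb m1] .
  moreover have "keyf Y c \<beta> = ?k" using key_unique[OF sb kb m2] .
  ultimately have "q \<in> Isec Y f" using kf by simp
  then have "tau f" unfolding Isec_def by blast
  then show False using assms(5) by simp
qed

lemma down:
  assumes "g \<in> NK" "f \<subseteq>\<^sub>m g"
  shows "f \<in> NK"
proof -
  have sg: "sel Col L g" and neg: "Isec Y g \<noteq> {}" and kg: "keyf Y c g \<in> K" using assms(1) unfolding NN_def by auto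
  have sf: "sel Col L f" using sel_le[OF sg assms(2)] .
  have kgi: "keyf Y c g \<in> Isec Y f" using key_in[OF sg neg] Inter_anti[OF assms(2), of Y] by blast
  then have nef: "Isec Y f \<noteq> {}" by blast
  have kfi: "keyf Y c f \<in> Isec Y f" using key_in[OF sf nef] .
  have le: "dist c (keyf Y c f) \<le> dist c (keyf Y c g)" using key_le[OF sf kgi] .
  have "keyf Y c f \<in> K"
  proof (cases "dist c (keyf Y c f) < dist c (keyf Y c g)")
    case True
    have "keyf Y c f \<in> KSet Col L Y c" unfolding KSet_def using sf nef by blast
    then show ?thesis using D True kg unfolding Dcl_def by blast
  next
    case False
    then have eq: "dist c (keyf Y c f) = dist c (keyf Y c g)" using le by simp
    have "\<forall>z\<in>Isec Y f. dist c (keyf Y c g) \<le> dist c z" using key_le[OF sf] eq by simp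
    then have "keyf Y c f = keyf Y c g" using key_unique[OF sf kgi] by simp
    then show ?thesis using kg by simp
  qed
  then show ?thesis unfolding NN_def using sf nef by simp
qed

lemma small:
  assumes "sel Col L f" "tau f" "blk f"
  shows "\<exists>\<sigma>. \<sigma> \<subseteq>\<^sub>m f \<and> blk \<sigma> \<and> card (dom \<sigma>) \<le> e"
proof -
  define Z where "Z = (\<lambda>x. case x of None \<Rightarrow> ball c r \<inter> S | Some i \<Rightarrow> Y (the (f i)))"
  define I where "I = insert None (Some ` dom f)"
  have domf: "dom f \<subseteq> Col" using assms(1) unfolding sel_def by simp
  have finI: "finite I" unfolding I_def using domf fin finite_subset by blast
  have fi: "i \<in> dom f \<Longrightarrow> the (f i) \<in> L i \<and> i \<in> Col" for i using assms(1) unfolding sel_def by auto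
  have cvI: "\<forall>x\<in>I. convex (Z x) \<and> Z x \<subseteq> S"
    unfolding I_def Z_def using cvx fi aff affine_imp_convex by (auto intro!: convex_Int)
  have ranf: "ran f = (\<lambda>i. the (f i)) ` dom f" by (rule ran_dom)
  have empt: "(\<Inter>x\<in>I. Z x) = {}"
  proof -
    have "(\<Inter>x\<in>I. Z x) = (ball c r \<inter> S) \<inter> (\<Inter>i\<in>dom f. Y (the (f i)))"
      unfolding I_def Z_def by auto
    also have "(\<Inter>i\<in>dom f. Y (the (f i))) = Isec Y f" unfolding Isec_def ranf by auto
    finally show ?thesis using assms(3) by blast
  qed
  obtain J where J: "J \<subseteq> I" "card J \<le> e + 1" "(\<Inter>x\<in>J. Z x) = {}"
    using Helly_aff_idx[OF finI dim cvI empt] by blast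
  have NJ: "None \<in> J"
  proof (rule ccontr)
    assume "None \<notin> J"
    then have "\<forall>x\<in>J. q \<in> Z x" using J(1) assms(2) unfolding I_def Z_def ranf by (auto split: option.split)
    then show False using J(3) by blast
  qed
  define \<sigma> where "\<sigma> = f |` {i. Some i \<in> J}"
  have le: "\<sigma> \<subseteq>\<^sub>m f" unfolding \<sigma>_def by (simp add: map_le_def)
  have domsig: "dom \<sigma> = {i. Some i \<in> J}" unfolding \<sigma>_def using J(1) unfolding I_def by auto
  have "Some ` dom \<sigma> \<subseteq> J - {None}" using domsig by auto
  then have "card (Some ` dom \<sigma>) \<le> card (J - {None})"
    using J(1) finI by (meson card_mono finite_Diff finite_subset)
  moreover have "card (Some ` dom \<sigma>) = card (dom \<sigma>)" by (simp add: card_image)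
  moreover have "card (J - {None}) = card J - 1" using NJ by simp
  ultimately have cd: "card (dom \<sigma>) \<le> e" using J(2) by linarith
  have ransig: "ran \<sigma> = (\<lambda>i. the (f i)) ` dom \<sigma>"
    unfolding ran_dom[of \<sigma>] using domsig unfolding \<sigma>_def by (intro image_cong) auto
  have "blk \<sigma>"
  proof (rule ccontr)
    assume "\<not> blk \<sigma>"
    then obtain z where z: "z \<in> Isec Y \<sigma>" "z \<in> ball c r" by blast
    have zS: "z \<in> S"
    proof (cases "dom \<sigma> = {}")
      case True
      have "J = {None}"
      proof -
        have "x = None" if "x \<in> J" for x
        proof (cases x)
          case (Some i)
          then have "i \<in> dom \<sigma>" using domsig that by simp
          then show ?thesis using True by simp
        qed simp
        then show ?thesis using NJ by blast
      qed
      then have "ball c r \<inter> S = {}" using J(3) unfolding Z_def by simp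
      then have "c \<notin> ball c r" using cS by blast
      then show ?thesis using z(2) by (simp add: mem_ball)
    next
      case False
      then obtain i where i: "i \<in> dom \<sigma>" by blast
      then have "z \<in> Y (the (f i))" using z(1) unfolding Isec_def ransig by blast
      then show ?thesis using cvx fi i domsig le by (meson domI map_le_implies_dom_le subsetD)
    qed
    have "z \<in> (\<Inter>x\<in>J. Z x)"
    proof
      fix x assume "x \<in> J"
      show "z \<in> Z x"
      proof (cases x)
        case None then show ?thesis using z zS unfolding Z_def by simp
      next
        case (Some i)
        then have "i \<in> dom \<sigma>" using domsig \<open>x \<in> J\<close> by simp
        then show ?thesis using z(1) Some unfolding Isec_def ransig Z_def by auto
      qed
    qed
    then show False using J(3) by blast
  qed
  then show ?thesis using le cd by blast
qed

end

context stp begin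

lemma card_dom_le: "sel Col L f \<Longrightarrow> card (dom f) \<le> card Col"
  unfolding sel_def using fin by (simp add: card_mono)

lemma finite_dom_sel: "sel Col L f \<Longrightarrow> finite (dom f)"
  unfolding sel_def using fin finite_subset by blast

lemma ext_in:
  assumes "Om Col L pr g" "\<beta> \<subseteq>\<^sub>m g" "tau \<beta>" "blk \<beta>" "\<not> tau g"
  shows "g \<in> PK"
  using assms F1 unfolding Pn_def Om_def by blast

lemma notin_tau:
  assumes "f \<in> PK" "\<beta> \<subseteq>\<^sub>m f" "tau \<beta>" "blk \<beta>"
  shows "\<exists>i y. f i = Some y \<and> q \<notin> Y y \<and> i \<in> Col \<and> y \<in> L i \<and> i \<notin> dom \<beta>"
proof -
  have sf: "sel Col L f" and fN: "f \<notin> NK" using assms(1) unfolding Pn_def Om_def by auto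
  have "\<not> tau f"
  proof
    assume t: "tau f"
    have "blk f" using assms(4) Inter_anti[OF assms(2), of Y] by blast
    then have "f \<in> NK" using A_char[OF sf] t by blast
    then show False using fN by simp
  qed
  then obtain y where y: "y \<in> ran f" "q \<notin> Y y" by blast
  then obtain i where i: "i \<in> Col" "f i = Some y" "y \<in> L i" using sel_lab[OF sf] by blast
  have "i \<notin> dom \<beta>"
  proof
    assume "i \<in> dom \<beta>"
    then obtain y' where "\<beta> i = Some y'" by blast
    moreover then have "f i = Some y'" using assms(2) unfolding map_le_def by (metis domI)
    ultimately have "y \<in> ran \<beta>" using i(2) by (auto simp: ran_def)
    then show False using assms(3) y(2) by blast
  qed
  then show ?thesis using i y by blast
qed

lemma bas_in:
  assumes "sel Col L \<sigma>" "tau \<sigma>" "blk \<sigma>" "card (dom \<sigma>) \<le> e"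
    and "i \<in> Col" "i \<notin> dom \<sigma>" "y \<in> L i" "q \<notin> Y y"
  shows "\<sigma>(i \<mapsto> y) \<in> PK"
proof (rule ext_in[OF _ le_upd[OF assms(6)] assms(2,3)])
  have fd: "finite (dom \<sigma>)" using finite_dom_sel[OF assms(1)] .
  have "card (dom (\<sigma>(i \<mapsto> y))) = card (dom \<sigma>) + 1" using fd assms(6) by simp
  then have "card (dom (\<sigma>(i \<mapsto> y))) < card Col" if pr using hpr[OF that] assms(4) by linarith
  then show "Om Col L pr (\<sigma>(i \<mapsto> y))" unfolding Om_def using sel_upd[OF assms(1,5,7)] by auto
  show "\<not> tau (\<sigma>(i \<mapsto> y))" using assms(8) by (auto simp: ran_upd_notin[OF assms(6)])
qed

lemma bconn_ne:
  assumes "sel Col L \<sigma>" "tau \<sigma>" "blk \<sigma>" "card (dom \<sigma>) \<le> e"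
    and "i \<in> Col" "i \<notin> dom \<sigma>" "y \<in> L i" "q \<notin> Y y"
    and "i' \<in> Col" "i' \<notin> dom \<sigma>" "y' \<in> L i'" "q \<notin> Y y'" "i \<noteq> i'"
  shows "R (\<sigma>(i \<mapsto> y)) (\<sigma>(i' \<mapsto> y'))"
proof -
  let ?g = "\<sigma>(i \<mapsto> y, i' \<mapsto> y')"
  have d1: "i' \<notin> dom (\<sigma>(i \<mapsto> y))" using assms(10,13) by simp
  have fd: "finite (dom \<sigma>)" using finite_dom_sel[OF assms(1)] .
  have sg: "sel Col L ?g" using sel_upd[OF sel_upd[OF assms(1,5,7)] assms(9,11)] .
  have le1: "\<sigma> \<subseteq>\<^sub>m \<sigma>(i \<mapsto> y)" using le_upd[OF assms(6)] .
  have le2: "\<sigma>(i \<mapsto> y) \<subseteq>\<^sub>m ?g" using le_upd[OF d1] .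
  have "?g = \<sigma>(i' \<mapsto> y', i \<mapsto> y)" using assms(13) by (simp add: fun_upd_twist)
  moreover have "i \<notin> dom (\<sigma>(i' \<mapsto> y'))" using assms(6,13) by simp
  ultimately have le3: "\<sigma>(i' \<mapsto> y') \<subseteq>\<^sub>m ?g" using le_upd by metis
  have "card (dom ?g) = card (dom \<sigma>) + 2" using fd assms(6,10,13) by simp
  then have "card (dom ?g) < card Col" if pr using hpr[OF that] assms(4) by linarith
  then have om: "Om Col L pr ?g" unfolding Om_def using sg by auto
  have nt: "\<not> tau ?g" using assms(8) by (auto simp: ran_upd_notin[OF d1] ran_upd_notin[OF assms(6)])
  have gin: "?g \<in> PK" using ext_in[OF om map_le_trans[OF le1 le2] assms(2,3) nt] .
  have a: "\<sigma>(i \<mapsto> y) \<in> PK" using bas_in[OF assms(1-8)] .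
  have b: "\<sigma>(i' \<mapsto> y') \<in> PK" using bas_in[OF assms(1-4,9-12)] .
  have "R (\<sigma>(i \<mapsto> y)) ?g" using cedge_step(1)[OF a gin le2] .
  moreover have "R ?g (\<sigma>(i' \<mapsto> y'))" using cedge_step(2)[OF gin b le3] .
  ultimately show ?thesis by simp
qed

lemma exists_out:
  assumes "\<not> pr" "i \<in> Col"
  shows "\<exists>z\<in>L i. q \<notin> Y z"
proof -
  have "\<Inter>(Y ` L i) = {}" using hnpr[OF assms(1)] assms(2) by blast
  then show ?thesis by blast
qed

lemma bconn:
  assumes "sel Col L \<sigma>" "tau \<sigma>" "blk \<sigma>" "card (dom \<sigma>) \<le> e"
    and "i \<in> Col" "i \<notin> dom \<sigma>" "y \<in> L i" "q \<notin> Y y"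
    and "i' \<in> Col" "i' \<notin> dom \<sigma>" "y' \<in> L i'" "q \<notin> Y y'"
  shows "R (\<sigma>(i \<mapsto> y)) (\<sigma>(i' \<mapsto> y'))"
proof (cases "i = i'")
  case False
  then show ?thesis using bconn_ne assms by blast
next
  case True
  show ?thesis
  proof (cases "y = y'")
    case True
    then show ?thesis using \<open>i = i'\<close> by simp
  next
    case False
    have npr: "\<not> pr"
    proof
      assume pr
      then obtain y0 where "L i = {y0}" using hpr assms(5) by blast
      then show False using assms(7,11) True False by simp
    qed
    have fd: "finite (dom \<sigma>)" using finite_dom_sel[OF assms(1)] .
    have "card (insert i (dom \<sigma>)) \<le> e + 1" using fd assms(4) by (simp add: card_insert_if)
    moreover have "e + 2 \<le> card Col" using hnpr[OF npr] by simp
    ultimately have "\<not> Col \<subseteq> insert i (dom \<sigma>)"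
      using card_mono[OF finite.insertI[OF fd]] by (metis add_le_cancel_left le_trans nat_1_add_1 not_one_le_zero add_le_mono1 le_add1 linorder_not_le trans_le_add1 one_add_one)
    then obtain i'' where i'': "i'' \<in> Col" "i'' \<noteq> i" "i'' \<notin> dom \<sigma>" by blast
    obtain z where z: "z \<in> L i''" "q \<notin> Y z" using exists_out[OF npr i''(1)] by blast
    have "R (\<sigma>(i \<mapsto> y)) (\<sigma>(i'' \<mapsto> z))"
      using bconn_ne[OF assms(1-8) i''(1,3) z] i''(2) by simp
    moreover have "R (\<sigma>(i'' \<mapsto> z)) (\<sigma>(i' \<mapsto> y'))"
      using bconn_ne[OF assms(1-4) i''(1,3) z assms(9-12)] i''(2) True by simp
    ultimately show ?thesis by simp
  qed
qed

lemma Sup_small: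
  assumes "sel Col L \<sigma>" "tau \<sigma>" "blk \<sigma>" "card (dom \<sigma>) \<le> e"
    and "f1 \<in> PK" "f2 \<in> PK" "\<sigma> \<subseteq>\<^sub>m f1" "\<sigma> \<subseteq>\<^sub>m f2"
  shows "R f1 f2"
proof -
  obtain i y where iy: "f1 i = Some y" "q \<notin> Y y" "i \<in> Col" "y \<in> L i" "i \<notin> dom \<sigma>"
    using notin_tau[OF assms(5,7,2,3)] by blast
  obtain i' y' where iy': "f2 i' = Some y'" "q \<notin> Y y'" "i' \<in> Col" "y' \<in> L i'" "i' \<notin> dom \<sigma>"
    using notin_tau[OF assms(6,8,2,3)] by blast
  have l1: "\<sigma>(i \<mapsto> y) \<subseteq>\<^sub>m f1" using assms(7) iy(1) unfolding map_le_def by auto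
  have l2: "\<sigma>(i' \<mapsto> y') \<subseteq>\<^sub>m f2" using assms(8) iy'(1) unfolding map_le_def by auto
  have b1: "\<sigma>(i \<mapsto> y) \<in> PK" using bas_in[OF assms(1-4) iy(3,5,4,2)] .
  have b2: "\<sigma>(i' \<mapsto> y') \<in> PK" using bas_in[OF assms(1-4) iy'(3,5,4,2)] .
  have "R f1 (\<sigma>(i \<mapsto> y))" using cedge_step(2)[OF assms(5) b1 l1] .
  moreover have "R (\<sigma>(i \<mapsto> y)) (\<sigma>(i' \<mapsto> y'))" using bconn[OF assms(1-4) iy(3,5,4,2) iy'(3,5,4,2)] .
  moreover have "R (\<sigma>(i' \<mapsto> y')) f2" using cedge_step(1)[OF b2 assms(6) l2] .
  ultimately show ?thesis by simp
qed

lemma Sup_gen: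
  assumes "sel Col L \<beta>" "tau \<beta>" "blk \<beta>"
    and "f1 \<in> PK" "f2 \<in> PK" "\<beta> \<subseteq>\<^sub>m f1" "\<beta> \<subseteq>\<^sub>m f2"
  shows "R f1 f2"
proof -
  obtain \<sigma> where s: "\<sigma> \<subseteq>\<^sub>m \<beta>" "blk \<sigma>" "card (dom \<sigma>) \<le> e" using small[OF assms(1-3)] by blast
  have "sel Col L \<sigma>" using sel_le[OF assms(1) s(1)] .
  moreover have "tau \<sigma>" using assms(2) ran_mono_le[OF s(1)] by blast
  ultimately show ?thesis using Sup_small s assms(4,5) map_le_trans[OF s(1) assms(6)] map_le_trans[OF s(1) assms(7)] by blast
qed

end

definition Sec :: "'a::euclidean_space \<Rightarrow> 'a \<Rightarrow> 'a set \<Rightarrow> 'a set" where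
  "Sec q w X = {v. v \<bullet> w = -1 \<and> (\<exists>\<epsilon>>0. q + \<epsilon> *\<^sub>R v \<in> X)}"

lemma sec_seg:
  fixes q v :: "'a::euclidean_space"
  assumes "convex X" "q \<in> X" "q + \<epsilon> *\<^sub>R v \<in> X" "\<epsilon> > 0" "0 < t" "t \<le> \<epsilon>"
  shows "q + t *\<^sub>R v \<in> X"
proof -
  let ?u = "t / \<epsilon>"
  have u: "0 \<le> ?u" "?u \<le> 1" using assms by auto
  have "(1 - ?u) *\<^sub>R q + ?u *\<^sub>R (q + \<epsilon> *\<^sub>R v) \<in> X"
    using convexD_alt[OF assms(1) assms(2) assms(3) u] .
  moreover have "(1 - ?u) *\<^sub>R q + ?u *\<^sub>R (q + \<epsilon> *\<^sub>R v) = q + t *\<^sub>R v"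
    using assms(4) by (simp add: algebra_simps)
  ultimately show ?thesis by simp
qed

lemma sec_convex:
  fixes q w :: "'a::euclidean_space"
  assumes "convex X" "q \<in> X"
  shows "convex (Sec q w X)"
proof (rule convexI)
  fix x y :: 'a and u v :: real
  assume x: "x \<in> Sec q w X" and y: "y \<in> Sec q w X" and uv: "0 \<le> u" "0 \<le> v" "u + v = 1"
  obtain e1 where e1: "e1 > 0" "q + e1 *\<^sub>R x \<in> X" "x \<bullet> w = -1" using x unfolding Sec_def by blast
  obtain e2 where e2: "e2 > 0" "q + e2 *\<^sub>R y \<in> X" "y \<bullet> w = -1" using y unfolding Sec_def by blast
  let ?e = "min e1 e2"
  have a: "q + ?e *\<^sub>R x \<in> X" using sec_seg[OF assms e1(2) e1(1)] e1(1) e2(1) by simp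
  have b: "q + ?e *\<^sub>R y \<in> X" using sec_seg[OF assms e2(2) e2(1)] e1(1) e2(1) by simp
  have "u *\<^sub>R (q + ?e *\<^sub>R x) + v *\<^sub>R (q + ?e *\<^sub>R y) \<in> X"
    using convexD[OF assms(1) a b uv] .
  moreover have "u *\<^sub>R (q + ?e *\<^sub>R x) + v *\<^sub>R (q + ?e *\<^sub>R y) = q + ?e *\<^sub>R (u *\<^sub>R x + v *\<^sub>R y)"
  proof -
    have "u *\<^sub>R (q + ?e *\<^sub>R x) + v *\<^sub>R (q + ?e *\<^sub>R y) = (u + v) *\<^sub>R q + ?e *\<^sub>R (u *\<^sub>R x + v *\<^sub>R y)"
      by (simp add: algebra_simps)
    then show ?thesis using uv(3) by simp
  qed
  ultimately have "q + ?e *\<^sub>R (u *\<^sub>R x + v *\<^sub>R y) \<in> X" by simp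
  moreover have "(u *\<^sub>R x + v *\<^sub>R y) \<bullet> w = -1"
    using e1(3) e2(3) uv(3) by (simp add: inner_add_left algebra_simps)
  moreover have "?e > 0" using e1 e2 by simp
  ultimately show "u *\<^sub>R x + v *\<^sub>R y \<in> Sec q w X" unfolding Sec_def by blast
qed

lemma sec_sub:
  fixes q w :: "'a::euclidean_space"
  assumes "affine S" "q \<in> S" "X \<subseteq> S"
  shows "Sec q w X \<subseteq> {v. w \<bullet> v = -1} \<inter> (+) (-q) ` S"
proof
  fix v assume "v \<in> Sec q w X"
  then obtain \<epsilon> where e: "\<epsilon> > 0" "q + \<epsilon> *\<^sub>R v \<in> X" "v \<bullet> w = -1" unfolding Sec_def by blast
  have "(1 - 1/\<epsilon>) *\<^sub>R q + (1/\<epsilon>) *\<^sub>R (q + \<epsilon> *\<^sub>R v) \<in> S"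
    using assms(1) unfolding affine_alt using assms(2) e(2) assms(3) by blast
  moreover have "(1 - 1/\<epsilon>) *\<^sub>R q + (1/\<epsilon>) *\<^sub>R (q + \<epsilon> *\<^sub>R v) = q + v"
    using e(1) by (simp add: algebra_simps)
  ultimately have "q + v \<in> S" by simp
  then have "v \<in> (+) (-q) ` S" by (rule_tac image_eqI[where x="q+v"]) auto
  then show "v \<in> {v. w \<bullet> v = -1} \<inter> (+) (-q) ` S" using e(3) by (simp add: inner_commute)
qed

lemma norm_sq_add: "(norm (x + y))\<^sup>2 = (norm x)\<^sup>2 + 2 * (x \<bullet> y) + (norm (y::'a::real_inner))\<^sup>2"
  by (simp add: power2_norm_eq_inner inner_add_left inner_add_right inner_commute)

lemma sec_main:
  fixes q c :: "'a::euclidean_space"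
  assumes "finite T" "\<forall>X\<in>T. convex X \<and> q \<in> X" "q \<noteq> c"
  shows "(\<Inter>X\<in>T. Sec q (q - c) X) = {} \<longleftrightarrow> \<Inter>T \<inter> ball c (dist c q) = {}"
proof
  let ?w = "q - c" and ?r = "dist c q"
  have rpos: "?r > 0" using assms(3) by simp
  assume H: "(\<Inter>X\<in>T. Sec q ?w X) = {}"
  show "\<Inter>T \<inter> ball c ?r = {}"
  proof (rule ccontr)
    assume "\<Inter>T \<inter> ball c ?r \<noteq> {}"
    then obtain z where z: "z \<in> \<Inter>T" "dist c z < ?r" by (auto simp: mem_ball)
    let ?d = "z - q"
    have "(norm (?d + ?w))\<^sup>2 < (norm ?w)\<^sup>2"
    proof -
      have "norm (?d + ?w) < norm ?w" using z(2) by (simp add: dist_norm norm_minus_commute)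
      then show ?thesis by (simp add: power_strict_mono)
    qed
    then have "(norm ?d)\<^sup>2 + 2 * (?d \<bullet> ?w) < 0" unfolding norm_sq_add by simp
    then have tpos: "- (?d \<bullet> ?w) > 0" by (smt (verit) zero_le_power2)
    define t where "t = - (?d \<bullet> ?w)"
    define v where "v = (1 / t) *\<^sub>R ?d"
    have tp: "t > 0" using tpos t_def by simp
    have vw: "v \<bullet> ?w = -1" unfolding v_def t_def using tpos by simp
    have qv: "q + t *\<^sub>R v = z" unfolding v_def using tp by simp
    have "v \<in> (\<Inter>X\<in>T. Sec q ?w X)" unfolding Sec_def using vw qv tp z(1) by auto
    then show False using H by blast
  qed
next
  let ?w = "q - c" and ?r = "dist c q"
  have rpos: "?r > 0" using assms(3) by simp
  assume H: "\<Inter>T \<inter> ball c ?r = {}"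
  show "(\<Inter>X\<in>T. Sec q ?w X) = {}"
  proof (rule ccontr)
    assume "(\<Inter>X\<in>T. Sec q ?w X) \<noteq> {}"
    then obtain v where v: "\<forall>X\<in>T. v \<in> Sec q ?w X" by blast
    have vw: "v \<bullet> ?w = -1" if "T \<noteq> {}" using v that unfolding Sec_def by auto
    have "\<forall>X\<in>T. \<exists>\<epsilon>>0. q + \<epsilon> *\<^sub>R v \<in> X" using v unfolding Sec_def by blast
    then obtain eps where eps: "\<forall>X\<in>T. eps X > 0 \<and> q + eps X *\<^sub>R v \<in> X" by metis
    define t where "t = min (Min (insert 1 (eps ` T))) (1 / ((norm v)\<^sup>2 + 1))"
    define M where "M = Min (insert 1 (eps ` T))"
    have finM: "finite (insert 1 (eps ` T))" using assms(1) by simp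
    have "M \<in> insert 1 (eps ` T)" unfolding M_def using finM by (rule Min_in) simp
    then have Mpos: "M > 0" using eps by auto
    have pos1: "(norm v)\<^sup>2 + 1 > 0" by (smt (verit) zero_le_power2)
    have tp: "t > 0" unfolding t_def M_def[symmetric] using Mpos pos1 by simp
    have tle: "t \<le> eps X" if "X \<in> T" for X
    proof -
      have "M \<le> eps X" unfolding M_def using finM that by (intro Min_le) auto
      moreover have "t \<le> M" unfolding t_def M_def by simp
      ultimately show ?thesis by simp
    qed
    have inT: "q + t *\<^sub>R v \<in> \<Inter>T"
    proof
      fix X assume X: "X \<in> T"
      show "q + t *\<^sub>R v \<in> X" using sec_seg[of X q "eps X" v t] assms(2) X eps tp tle[OF X] by blast
    qed
    have "dist c (q + t *\<^sub>R v) < ?r"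
    proof (cases "T = {}")
      case True
      then have "ball c ?r = {}" using H by simp
      then show ?thesis using rpos by simp
    next
      case False
      have t1: "t * (norm v)\<^sup>2 < 1"
      proof -
        have "t \<le> 1 / ((norm v)\<^sup>2 + 1)" unfolding t_def by simp
        then have "t * ((norm v)\<^sup>2 + 1) \<le> 1" using pos1 by (simp add: le_divide_eq)
        then show ?thesis using tp by (simp add: algebra_simps)
      qed
      have "(norm (?w + t *\<^sub>R v))\<^sup>2 = (norm ?w)\<^sup>2 + 2 * t * (?w \<bullet> v) + t\<^sup>2 * (norm v)\<^sup>2"
        unfolding norm_sq_add by (simp add: power_mult_distrib)
      also have "?w \<bullet> v = -1" using vw[OF False] by (simp add: inner_commute)
      finally have eq: "(norm (?w + t *\<^sub>R v))\<^sup>2 = (norm ?w)\<^sup>2 - t * (2 - t * (norm v)\<^sup>2)"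
        by (simp add: power2_eq_square algebra_simps)
      have "t * (2 - t * (norm v)\<^sup>2) > 0" using t1 tp by simp
      then have "(norm (?w + t *\<^sub>R v))\<^sup>2 < (norm ?w)\<^sup>2" using eq by simp
      then have "norm (?w + t *\<^sub>R v) < norm ?w" using power2_less_imp_less by fastforce
      moreover have "?w + t *\<^sub>R v = (q + t *\<^sub>R v) - c" by simp
      ultimately show ?thesis by (simp add: dist_norm norm_minus_commute)
    qed
    then show False using H inT by (auto simp: mem_ball)
  qed
qed

lemma sec_space:
  fixes q c :: "'a::euclidean_space"
  assumes "affine S" "q \<in> S" "c \<in> S" "q \<noteq> c" "aff_dim S \<le> int e"
  shows "affine ({v. (q - c) \<bullet> v = -1} \<inter> (+) (-q) ` S)"
    and "{v. (q - c) \<bullet> v = -1} \<inter> (+) (-q) ` S \<noteq> {}"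
    and "aff_dim ({v. (q - c) \<bullet> v = -1} \<inter> (+) (-q) ` S) \<le> int (e - 1)"
    and "e \<ge> 1"
proof -
  let ?w = "q - c" and ?T = "(+) (-q) ` S"
  have aT: "affine ?T" using assms(1) affine_translation by blast
  have hyp: "affine {v. ?w \<bullet> v = -1}" by (simp add: affine_hyperplane)
  show "affine ({v. ?w \<bullet> v = -1} \<inter> ?T)" using aT hyp by (simp add: affine_Int)
  have wne: "?w \<bullet> ?w > 0" using assms(4) by simp
  define v0 where "v0 = (- (1 / (?w \<bullet> ?w))) *\<^sub>R ?w"
  have "(1 - 1 / (?w \<bullet> ?w)) *\<^sub>R q + (1 / (?w \<bullet> ?w)) *\<^sub>R c \<in> S"
    using assms(1) unfolding affine_alt using assms(2,3) by blast
  moreover have "(1 - 1 / (?w \<bullet> ?w)) *\<^sub>R q + (1 / (?w \<bullet> ?w)) *\<^sub>R c = q + v0"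
    unfolding v0_def by (simp add: algebra_simps)
  ultimately have "q + v0 \<in> S" by simp
  then have v0T: "v0 \<in> ?T" by (rule_tac image_eqI[where x="q+v0"]) auto
  have v0w: "?w \<bullet> v0 = -1" unfolding v0_def using wne by simp
  show ne: "{v. ?w \<bullet> v = -1} \<inter> ?T \<noteq> {}" using v0T v0w by blast
  have "0 \<in> ?T" using assms(2) by (rule_tac image_eqI[where x=q]) auto
  then have nsub: "\<not> ?T \<subseteq> {v. ?w \<bullet> v = -1}" by auto
  have "aff_dim (?T \<inter> {v. ?w \<bullet> v = -1}) = aff_dim ?T - 1"
    using aff_dim_affine_Int_hyperplane[OF aT, of ?w "-1"] ne nsub by (auto simp: Int_commute)
  moreover have "aff_dim ?T = aff_dim S" by (rule aff_dim_translation_eq)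
  moreover have "aff_dim {q, c} \<le> aff_dim S" using assms(2,3) by (intro aff_dim_subset) auto
  ultimately show "e \<ge> 1" and "aff_dim ({v. ?w \<bullet> v = -1} \<inter> ?T) \<le> int (e - 1)"
    using assms(4,5) by (auto simp: Int_commute)
qed

locale stp2 = stp Col L Y pr S e c K q
  for Col :: "'c set" and L :: "'c \<Rightarrow> 'b set" and Y :: "'b \<Rightarrow> 'a::euclidean_space set"
    and pr S e c K q +
  assumes IHQ: "\<forall>e'<e. \<forall>(Col'::'c set) (L'::'c \<Rightarrow> 'b set) (Y'::'b \<Rightarrow> 'a set) S'.
      hypG Col' L' Y' True S' e' \<longrightarrow> pconn (PP Col' L' Y' True)"
begin

lemma sub_rho: "sel Col L \<rho> \<Longrightarrow> tau \<rho> \<Longrightarrow> g \<subseteq>\<^sub>m \<rho> \<Longrightarrow> sel Col L g \<and> tau g"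
  using sel_le ran_mono_le by blast

lemma pr_out:
  assumes "pr" "sel Col L g" "tau g" "i \<in> Col" "y \<in> L i" "q \<notin> Y y"
  shows "i \<notin> dom g"
proof
  assume "i \<in> dom g"
  then obtain y' where y': "g i = Some y'" by blast
  then have "y' \<in> L i" using assms(2) unfolding sel_def by blast
  moreover obtain y0 where "L i = {y0}" using hpr[OF assms(1)] assms(4) by blast
  ultimately have "y' = y" using assms(5) by simp
  moreover have "y' \<in> ran g" using y' by (auto simp: ran_def)
  ultimately show False using assms(3,6) by blast
qed

lemma sel_sub_char:
  "sel (dom \<rho>) (\<lambda>i. {the (\<rho> i)}) g \<longleftrightarrow> g \<subseteq>\<^sub>m \<rho>"
proof
  assume a: "sel (dom \<rho>) (\<lambda>i. {the (\<rho> i)}) g"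
  show "g \<subseteq>\<^sub>m \<rho>" unfolding map_le_def
  proof
    fix i assume "i \<in> dom g"
    then obtain y where y: "g i = Some y" by blast
    then have "i \<in> dom \<rho>" "y = the (\<rho> i)" using a unfolding sel_def by auto
    then show "g i = \<rho> i" using y by auto
  qed
next
  assume a: "g \<subseteq>\<^sub>m \<rho>"
  have "dom g \<subseteq> dom \<rho>" using a by (rule map_le_implies_dom_le)
  moreover have "g i = Some y \<Longrightarrow> y \<in> {the (\<rho> i)}" for i y
    using a unfolding map_le_def by (metis domI option.sel singletonI)
  ultimately show "sel (dom \<rho>) (\<lambda>i. {the (\<rho> i)}) g" unfolding sel_def by blast
qed

lemma Link:
  assumes rho: "sel Col L \<rho>" "tau \<rho>" "blk \<rho>" "Om Col L pr \<rho>"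
    and b1: "\<beta>1 \<subseteq>\<^sub>m \<rho>" "blk \<beta>1" and inv1: "\<forall>f\<in>PK. \<beta>1 \<subseteq>\<^sub>m f \<longrightarrow> R s f"
    and f1: "f1 \<in> PK" "\<beta>1 \<subseteq>\<^sub>m f1"
    and b2: "\<beta>2 \<subseteq>\<^sub>m \<rho>" "blk \<beta>2"
  shows "\<exists>\<sigma>2. \<sigma>2 \<subseteq>\<^sub>m \<beta>2 \<and> blk \<sigma>2 \<and> (\<forall>f\<in>PK. \<sigma>2 \<subseteq>\<^sub>m f \<longrightarrow> R s f) \<and> (\<exists>f2\<in>PK. \<sigma>2 \<subseteq>\<^sub>m f2)"
proof -
  have sb1: "sel Col L \<beta>1" "tau \<beta>1" using sub_rho[OF rho(1,2) b1(1)] by auto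
  have sb2: "sel Col L \<beta>2" "tau \<beta>2" using sub_rho[OF rho(1,2) b2(1)] by auto
  obtain \<sigma>2 where s2: "\<sigma>2 \<subseteq>\<^sub>m \<beta>2" "blk \<sigma>2" "card (dom \<sigma>2) \<le> e" using small[OF sb2 b2(2)] by blast
  have ss2: "sel Col L \<sigma>2" "tau \<sigma>2" using sub_rho[OF sb2 s2(1)] by auto
  obtain i0 y0 where w0: "f1 i0 = Some y0" "q \<notin> Y y0" "i0 \<in> Col" "y0 \<in> L i0" "i0 \<notin> dom \<beta>1"
    using notin_tau[OF f1(1) f1(2) sb1(2) b1(2)] by blast
  have Rsf1: "R s f1" using inv1 f1 by blast
  have "\<exists>i y. i \<in> Col \<and> i \<notin> dom \<sigma>2 \<and> y \<in> L i \<and> q \<notin> Y y"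
  proof (cases pr)
    case True
    then show ?thesis using pr_out[OF True ss2 w0(3,4,2)] w0 by blast
  next
    case False
    have fd: "finite (dom \<sigma>2)" using finite_dom_sel[OF ss2(1)] .
    have "card (dom \<sigma>2) < card Col" using s2(3) hnpr[OF False] by linarith
    then have "\<not> Col \<subseteq> dom \<sigma>2"
    proof (intro notI)
      assume "Col \<subseteq> dom \<sigma>2"
      then have "card Col \<le> card (dom \<sigma>2)" by (rule card_mono[OF fd])
      then show False using \<open>card (dom \<sigma>2) < card Col\<close> by simp
    qed
    then obtain i where "i \<in> Col" "i \<notin> dom \<sigma>2" by blast
    then show ?thesis using exists_out[OF False] by blast
  qed
  then obtain i2 y2 where iy2: "i2 \<in> Col" "i2 \<notin> dom \<sigma>2" "y2 \<in> L i2" "q \<notin> Y y2" by blast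
  define f2 where "f2 = \<sigma>2(i2 \<mapsto> y2)"
  have f2in: "f2 \<in> PK" unfolding f2_def using bas_in[OF ss2 s2(2,3) iy2] .
  have f2le: "\<sigma>2 \<subseteq>\<^sub>m f2" unfolding f2_def using le_upd[OF iy2(2)] .
  have suff: "\<forall>f\<in>PK. \<sigma>2 \<subseteq>\<^sub>m f \<longrightarrow> R s f" if "g \<in> PK" "\<sigma>2 \<subseteq>\<^sub>m g" "R s g" for g
    using Sup_small[OF ss2 s2(2,3) that(1) _ that(2)] that(3) by (meson rtranclp_trans)
  have "\<exists>g\<in>PK. \<sigma>2 \<subseteq>\<^sub>m g \<and> R s g"
  proof (cases "q = c")
    case True
    then have bempty: "ball c r = {}" by simp
    have "R f1 f2"
      by (rule Sup_small[of Map.empty]) (use bempty f1 f2in in \<open>auto simp: sel_def\<close>)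
    then show ?thesis using Rsf1 f2in f2le by (meson rtranclp_trans)
  next
    case qc: False
    show ?thesis
    proof (cases "\<exists>i y. i \<in> Col \<and> i \<notin> dom \<rho> \<and> y \<in> L i \<and> q \<notin> Y y \<and> Om Col L pr (\<rho>(i \<mapsto> y))")
      case True
      then obtain i y where iy: "i \<in> Col" "i \<notin> dom \<rho>" "y \<in> L i" "q \<notin> Y y" "Om Col L pr (\<rho>(i \<mapsto> y))" by blast
      have lr: "\<rho> \<subseteq>\<^sub>m \<rho>(i \<mapsto> y)" using le_upd[OF iy(2)] .
      have nt: "\<not> tau (\<rho>(i \<mapsto> y))" using iy(4) by (auto simp: ran_upd_notin[OF iy(2)])
      have gin: "\<rho>(i \<mapsto> y) \<in> PK" using ext_in[OF iy(5) lr rho(2,3) nt] .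
      have "R s (\<rho>(i \<mapsto> y))" using inv1 gin map_le_trans[OF b1(1) lr] by blast
      moreover have "\<sigma>2 \<subseteq>\<^sub>m \<rho>(i \<mapsto> y)" using map_le_trans[OF map_le_trans[OF s2(1) b2(1)] lr] .
      ultimately show ?thesis using gin by blast
    next
      case notA: False
      have fdr: "finite (dom \<rho>)" using finite_dom_sel[OF rho(1)] .
      have dr: "dom \<rho> \<subseteq> Col" using rho(1) unfolding sel_def by simp
      have cardr: "e + 2 \<le> card (dom \<rho>)"
      proof (cases pr)
        case True
        have i0r: "i0 \<notin> dom \<rho>" using pr_out[OF True rho(1,2) w0(3,4,2)] .
        have "sel Col L (\<rho>(i0 \<mapsto> y0))" using sel_upd[OF rho(1) w0(3,4)] .
        then have "dom (\<rho>(i0 \<mapsto> y0)) = Col" using notA i0r w0 True unfolding Om_def by blast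
        then have "insert i0 (dom \<rho>) = Col" by simp
        then have "card Col = card (dom \<rho>) + 1" using fdr i0r by (metis card_insert_disjoint Suc_eq_plus1)
        then show ?thesis using hpr[OF True] by linarith
      next
        case False
        have "Col \<subseteq> dom \<rho>"
        proof
          fix i assume i: "i \<in> Col"
          show "i \<in> dom \<rho>"
          proof (rule ccontr)
            assume ni: "i \<notin> dom \<rho>"
            obtain z where z: "z \<in> L i" "q \<notin> Y z" using exists_out[OF False i] by blast
            have "Om Col L pr (\<rho>(i \<mapsto> z))" unfolding Om_def using sel_upd[OF rho(1) i z(1)] False by simp
            then show False using notA i ni z by blast
          qed
        qed
        then have "dom \<rho> = Col" using dr by blast
        then show ?thesis using hnpr[OF False] by simp
      qed
      obtain y1 where y1: "y1 \<in> ran \<rho>"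
      proof -
        have "dom \<rho> \<noteq> {}" using cardr by auto
        then obtain i where "i \<in> dom \<rho>" by blast
        then obtain y where "\<rho> i = Some y" by blast
        then show ?thesis using that by (auto simp: ran_def)
      qed
      have qS: "q \<in> S" using rho(2) y1 lab_props[OF rho(1) y1] by blast
      define w where "w = q - c"
      define S' where "S' = {v. w \<bullet> v = -1} \<inter> (+) (-q) ` S"
      have sp: "affine S'" "S' \<noteq> {}" "aff_dim S' \<le> int (e - 1)" "e \<ge> 1"
        using sec_space[OF aff qS cS qc dim] unfolding S'_def w_def by auto
      define Col' where "Col' = dom \<rho>"
      define L' where "L' = (\<lambda>i. {the (\<rho> i)})"
      define Y' where "Y' = (\<lambda>y. Sec q w (Y y))"
      have labr: "the (\<rho> i) \<in> ran \<rho>" if "i \<in> dom \<rho>" for i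
        using that by (auto simp: ran_def)
      have hyp: "hypG Col' L' Y' True S' (e - 1)"
        unfolding hypG_def
      proof (intro conjI)
        show "finite Col'" unfolding Col'_def using fdr .
        show "\<forall>i\<in>Col'. finite (L' i) \<and> L' i \<noteq> {}" unfolding L'_def by simp
        show "\<forall>i\<in>Col'. \<forall>y\<in>L' i. convex (Y' y) \<and> Y' y \<subseteq> S'"
        proof (intro ballI)
          fix i y assume i: "i \<in> Col'" and y: "y \<in> L' i"
          then have yr: "y \<in> ran \<rho>" using labr unfolding Col'_def L'_def by simp
          have lp: "convex (Y y)" "Y y \<subseteq> S" using lab_props[OF rho(1) yr] by auto
          have qy: "q \<in> Y y" using rho(2) yr by blast
          show "convex (Y' y) \<and> Y' y \<subseteq> S'"
            unfolding Y'_def S'_def using sec_convex[OF lp(1) qy] sec_sub[OF aff qS lp(2)] by blast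
        qed
        show "affine S'" "S' \<noteq> {}" "aff_dim S' \<le> int (e - 1)" using sp by auto
        show "True \<longrightarrow> e - 1 + 3 \<le> card Col' \<and> (\<forall>i\<in>Col'. \<exists>y. L' i = {y})"
          using cardr sp(4) unfolding Col'_def L'_def by auto
        show "\<not> True \<longrightarrow> e - 1 + 2 \<le> card Col' \<and> (\<forall>i\<in>Col'. \<Inter> (Y' ` L' i) = {})" by simp
      qed
      have "e - 1 < e" using sp(4) by simp
      then have pc: "pconn (PP Col' L' Y' True)" using IHQ hyp by blast
      have PPc: "g \<in> PP Col' L' Y' True \<longleftrightarrow> g \<subseteq>\<^sub>m \<rho> \<and> dom g \<noteq> dom \<rho> \<and> blk g" for g
      proof -
        have "sel Col' L' g \<longleftrightarrow> g \<subseteq>\<^sub>m \<rho>" unfolding Col'_def L'_def by (rule sel_sub_char)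
        moreover have "Isec Y' g = {} \<longleftrightarrow> blk g" if gr: "g \<subseteq>\<^sub>m \<rho>"
        proof -
          have sg: "sel Col L g" "tau g" using sub_rho[OF rho(1,2) gr] by auto
          have ft: "finite (Y ` ran g)" using finite_dom_sel[OF sg(1)] by (simp add: finite_ran)
          have cv: "\<forall>X\<in>Y ` ran g. convex X \<and> q \<in> X" using lab_props[OF sg(1)] sg(2) by blast
          have "Isec Y' g = (\<Inter>X\<in>Y ` ran g. Sec q (q - c) X)" unfolding Isec_def Y'_def w_def by auto
          moreover have "Isec Y g = \<Inter>(Y ` ran g)" unfolding Isec_def ..
          ultimately show ?thesis using sec_main[OF ft cv qc] by simp
        qed
        ultimately show ?thesis unfolding PP_def Om_def Col'_def by blast
      qed
      obtain \<sigma>1 where s1: "\<sigma>1 \<subseteq>\<^sub>m \<beta>1" "blk \<sigma>1" "card (dom \<sigma>1) \<le> e" using small[OF sb1 b1(2)] by blast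
      have ss1: "sel Col L \<sigma>1" "tau \<sigma>1" using sub_rho[OF sb1 s1(1)] by auto
      have cardne: "dom g \<noteq> dom \<rho>" if "card (dom g) \<le> e" for g using that cardr by auto
      have s1P: "\<sigma>1 \<in> PP Col' L' Y' True" unfolding PPc using map_le_trans[OF s1(1) b1(1)] cardne[OF s1(3)] s1(2) by blast
      have s2P: "\<sigma>2 \<in> PP Col' L' Y' True" unfolding PPc using map_le_trans[OF s2(1) b2(1)] cardne[OF s2(3)] s2(2) by blast
      have chain: "(cedge (PP Col' L' Y' True))\<^sup>*\<^sup>* \<sigma>1 \<sigma>2" using pc s1P s2P unfolding pconn_def by blast
      have "(cedge (PP Col' L' Y' True))\<^sup>*\<^sup>* \<sigma>1 g \<Longrightarrow> (\<forall>f\<in>PK. g \<subseteq>\<^sub>m f \<longrightarrow> R s f)" for g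
      proof (induction rule: rtranclp_induct)
        case base
        show ?case
        proof (intro ballI impI)
          fix f assume "f \<in> PK" "\<sigma>1 \<subseteq>\<^sub>m f"
          then have "R f1 f" using Sup_small[OF ss1 s1(2,3) f1(1) _ map_le_trans[OF s1(1) f1(2)]] by blast
          then show "R s f" using Rsf1 by simp
        qed
      next
        case (step g g')
        have gP: "g \<in> PP Col' L' Y' True" and g'P: "g' \<in> PP Col' L' Y' True"
          and cmp: "g \<subseteq>\<^sub>m g' \<or> g' \<subseteq>\<^sub>m g" using step(2) unfolding cedge_def by auto
        have gc: "g \<subseteq>\<^sub>m \<rho>" "dom g \<noteq> dom \<rho>" "blk g" using gP unfolding PPc by auto
        have g'c: "g' \<subseteq>\<^sub>m \<rho>" "dom g' \<noteq> dom \<rho>" "blk g'" using g'P unfolding PPc by auto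
        have sg: "sel Col L g" "tau g" using sub_rho[OF rho(1,2) gc(1)] by auto
        have sg': "sel Col L g'" "tau g'" using sub_rho[OF rho(1,2) g'c(1)] by auto
        show ?case
        proof (cases "g \<subseteq>\<^sub>m g'")
          case True
          then show ?thesis using step(3) map_le_trans by blast
        next
          case False
          then have g'g: "g' \<subseteq>\<^sub>m g" using cmp by blast
          have dgr: "dom g \<subseteq> dom \<rho>" using gc(1) by (rule map_le_implies_dom_le)
          then obtain j where j: "j \<in> dom \<rho>" "j \<notin> dom g" using gc(2) by blast
          have jC: "j \<in> Col" using j dr by blast
          have "\<exists>i y. i \<in> Col \<and> i \<notin> dom g \<and> y \<in> L i \<and> q \<notin> Y y \<and> Om Col L pr (g(i \<mapsto> y))"
          proof (cases pr)
            case True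
            have i0r: "i0 \<notin> dom \<rho>" using pr_out[OF True rho(1,2) w0(3,4,2)] .
            then have i0g: "i0 \<notin> dom g" using dgr by blast
            have "j \<noteq> i0" using j i0r by blast
            then have "dom (g(i0 \<mapsto> y0)) \<noteq> Col" using j jC by auto
            then have "Om Col L pr (g(i0 \<mapsto> y0))" unfolding Om_def using sel_upd[OF sg(1) w0(3,4)] by simp
            then show ?thesis using i0g w0 by blast
          next
            case False
            obtain z where z: "z \<in> L j" "q \<notin> Y z" using exists_out[OF False jC] by blast
            have "Om Col L pr (g(j \<mapsto> z))" unfolding Om_def using sel_upd[OF sg(1) jC z(1)] False by simp
            then show ?thesis using jC j z by blast
          qed
          then obtain i y where iy: "i \<in> Col" "i \<notin> dom g" "y \<in> L i" "q \<notin> Y y" "Om Col L pr (g(i \<mapsto> y))" by blast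
          have lg: "g \<subseteq>\<^sub>m g(i \<mapsto> y)" using le_upd[OF iy(2)] .
          have nt: "\<not> tau (g(i \<mapsto> y))" using iy(4) by (auto simp: ran_upd_notin[OF iy(2)])
          have gin: "g(i \<mapsto> y) \<in> PK" using ext_in[OF iy(5) lg sg(2) gc(3) nt] .
          have Rg: "R s (g(i \<mapsto> y))" using step(3) gin lg by blast
          show ?thesis
          proof (intro ballI impI)
            fix f assume "f \<in> PK" "g' \<subseteq>\<^sub>m f"
            then have "R (g(i \<mapsto> y)) f" using Sup_gen[OF sg' g'c(3) gin _ map_le_trans[OF g'g lg]] by blast
            then show "R s f" using Rg by simp
          qed
        qed
      qed
      then have "\<forall>f\<in>PK. \<sigma>2 \<subseteq>\<^sub>m f \<longrightarrow> R s f" using chain by blast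
      then show ?thesis using f2in f2le by blast
    qed
  qed
  then obtain g where "g \<in> PK" "\<sigma>2 \<subseteq>\<^sub>m g" "R s g" by blast
  then have "\<forall>f\<in>PK. \<sigma>2 \<subseteq>\<^sub>m f \<longrightarrow> R s f" using suff by blast
  then show ?thesis using s2(1,2) f2in f2le by blast
qed

end

context stp2 begin

lemma PK_sub: "PK \<subseteq> PK'"
  unfolding Pn_def NN_def by auto

lemma inA:
  assumes "v \<in> PK'" "v \<notin> PK"
  shows "sel Col L v \<and> tau v \<and> blk v \<and> Om Col L pr v \<and> v \<in> NK"
proof -
  have om: "Om Col L pr v" and n': "v \<notin> NK'" using assms(1) unfolding Pn_def by auto
  have n: "v \<in> NK" using assms(2) om unfolding Pn_def by auto
  have sv: "sel Col L v" using om unfolding Om_def by simp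
  then show ?thesis using A_char[OF sv] n n' om by blast
qed

lemma step:
  assumes IHK: "pconn PK'"
  shows "pconn PK"
  unfolding pconn_def
proof (intro ballI)
  fix s t assume s: "s \<in> PK" and t: "t \<in> PK"
  have path: "(cedge PK')\<^sup>*\<^sup>* s t" using IHK s t PK_sub unfolding pconn_def by blast
  define Phi where "Phi = (\<lambda>v. v \<in> PK' \<and> (v \<in> PK \<longrightarrow> R s v) \<and>
     (v \<notin> PK \<longrightarrow> (\<exists>\<beta>. \<beta> \<subseteq>\<^sub>m v \<and> blk \<beta> \<and> (\<forall>f\<in>PK. \<beta> \<subseteq>\<^sub>m f \<longrightarrow> R s f) \<and> (\<exists>f\<in>PK. \<beta> \<subseteq>\<^sub>m f))))"
  have "(cedge PK')\<^sup>*\<^sup>* s v \<Longrightarrow> Phi v" for v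
  proof (induction rule: rtranclp_induct)
    case base
    then show ?case unfolding Phi_def using s PK_sub by auto
  next
    case (step u v)
    have u': "u \<in> PK'" and v': "v \<in> PK'" and cmp: "u \<subseteq>\<^sub>m v \<or> v \<subseteq>\<^sub>m u"
      using step(2) unfolding cedge_def by auto
    have Pu: "Phi u" by fact
    show ?case
    proof (cases "u \<in> PK")
      case uP: True
      have Rsu: "R s u" using Pu uP unfolding Phi_def by blast
      show ?thesis
      proof (cases "v \<in> PK")
        case True
        have "cedge PK u v" using uP True cmp unfolding cedge_def by blast
        then have "R s v" using Rsu by simp
        then show ?thesis unfolding Phi_def using v' True by blast
      next
        case False
        have vA: "sel Col L v" "tau v" "blk v" "v \<in> NK" using inA[OF v' False] by auto
        have "\<not> u \<subseteq>\<^sub>m v"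
        proof
          assume "u \<subseteq>\<^sub>m v"
          then have "u \<in> NK" using down[OF vA(4)] by blast
          then show False using uP unfolding Pn_def by blast
        qed
        then have vu: "v \<subseteq>\<^sub>m u" using cmp by blast
        have "\<forall>f\<in>PK. v \<subseteq>\<^sub>m f \<longrightarrow> R s f"
        proof (intro ballI impI)
          fix f assume "f \<in> PK" "v \<subseteq>\<^sub>m f"
          then have "R u f" using Sup_gen[OF vA(1,2,3) uP _ vu] by blast
          then show "R s f" using Rsu by simp
        qed
        moreover have "v \<subseteq>\<^sub>m v" by simp
        ultimately show ?thesis unfolding Phi_def using v' False vA(3) vu uP by blast
      qed
    next
      case uN: False
      have uA: "sel Col L u" "tau u" "blk u" "Om Col L pr u" "u \<in> NK" using inA[OF u' uN] by auto
      obtain \<beta> where b: "\<beta> \<subseteq>\<^sub>m u" "blk \<beta>" "\<forall>f\<in>PK. \<beta> \<subseteq>\<^sub>m f \<longrightarrow> R s f" "\<exists>f\<in>PK. \<beta> \<subseteq>\<^sub>m f"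
        using Pu uN unfolding Phi_def by blast
      show ?thesis
      proof (cases "v \<in> PK")
        case True
        have "\<not> v \<subseteq>\<^sub>m u"
        proof
          assume "v \<subseteq>\<^sub>m u"
          then have "v \<in> NK" using down[OF uA(5)] by blast
          then show False using True unfolding Pn_def by blast
        qed
        then have "u \<subseteq>\<^sub>m v" using cmp by blast
        then have "R s v" using b(3) True map_le_trans[OF b(1)] by blast
        then show ?thesis unfolding Phi_def using v' True by blast
      next
        case False
        have vA: "sel Col L v" "tau v" "blk v" using inA[OF v' False] by auto
        show ?thesis
        proof (cases "u \<subseteq>\<^sub>m v")
          case True
          then show ?thesis unfolding Phi_def using v' b map_le_trans[OF b(1) True] by blast
        next
          case False
          then have vu: "v \<subseteq>\<^sub>m u" using cmp by blast
          obtain f1 where f1: "f1 \<in> PK" "\<beta> \<subseteq>\<^sub>m f1" using b(4) by blast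
          have "\<exists>\<sigma>2. \<sigma>2 \<subseteq>\<^sub>m v \<and> blk \<sigma>2 \<and> (\<forall>f\<in>PK. \<sigma>2 \<subseteq>\<^sub>m f \<longrightarrow> R s f) \<and> (\<exists>f2\<in>PK. \<sigma>2 \<subseteq>\<^sub>m f2)"
            using Link[OF uA(1-4) b(1,2,3) f1 vu vA(3)] .
          then show ?thesis unfolding Phi_def using v' by blast
        qed
      qed
    qed
  qed
  then have "Phi t" using path by blast
  then show "R s t" unfolding Phi_def using t by blast
qed

end

lemma finite_KSet:
  assumes "finite Col" "\<forall>i\<in>Col. finite (L i)"
  shows "finite (KSet Col L Y c)"
proof -
  have "KSet Col L Y c \<subseteq> keyf Y c ` {f. sel Col L f}" unfolding KSet_def by auto
  then show ?thesis using finite_sels[OF assms] finite_surj by blast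
qed

lemma sweep:
  fixes Col :: "'c set" and L :: "'c \<Rightarrow> 'b set" and Y :: "'b \<Rightarrow> 'a::euclidean_space set"
  assumes fin: "finite Col" and Lfin: "\<forall>i\<in>Col. finite (L i) \<and> L i \<noteq> {}"
    and cvx: "\<forall>i\<in>Col. \<forall>y\<in>L i. convex (Y y) \<and> compact (Y y) \<and> Y y \<subseteq> S"
    and aff: "affine S" and cS: "c \<in> S" and dim: "aff_dim S \<le> int e"
    and hpr: "pr \<Longrightarrow> e + 3 \<le> card Col \<and> (\<forall>i\<in>Col. \<exists>y. L i = {y})"
    and hnpr: "\<not> pr \<Longrightarrow> e + 2 \<le> card Col \<and> (\<forall>i\<in>Col. \<Inter>(Y ` L i) = {})"
    and IHQ: "\<forall>e'<e. \<forall>(Col'::'c set) (L'::'c \<Rightarrow> 'b set) (Y'::'b \<Rightarrow> 'a set) S'.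
      hypG Col' L' Y' True S' e' \<longrightarrow> pconn (PP Col' L' Y' True)"
  shows "K \<subseteq> KSet Col L Y c \<Longrightarrow> Dcl Col L Y c K \<Longrightarrow> pconn (Pn Col L Y pr c K)"
proof (induction "card K" arbitrary: K rule: less_induct)
  case less
  have finK: "finite K" using less.prems(1) finite_KSet[of Col L Y c] fin Lfin finite_subset by blast
  show ?case
  proof (cases "K = {}")
    case True
    then have P: "Pn Col L Y pr c K = {f. Om Col L pr f}" unfolding Pn_def NN_def by auto
    have cne: "Col \<noteq> {}" using hpr hnpr by (cases pr) auto
    have em: "Map.empty \<in> Pn Col L Y pr c K" unfolding P Om_def sel_def using cne by simp
    show ?thesis unfolding pconn_def
    proof (intro ballI)
      fix u v assume u: "u \<in> Pn Col L Y pr c K" and v: "v \<in> Pn Col L Y pr c K"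
      have "(cedge (Pn Col L Y pr c K))\<^sup>*\<^sup>* u Map.empty" using cedge_step(2)[OF u em] by (simp add: map_le_def)
      moreover have "(cedge (Pn Col L Y pr c K))\<^sup>*\<^sup>* Map.empty v" using cedge_step(1)[OF em v] by (simp add: map_le_def)
      ultimately show "(cedge (Pn Col L Y pr c K))\<^sup>*\<^sup>* u v" by simp
    qed
  next
    case False
    define m where "m = Max (dist c ` K)"
    have "m \<in> dist c ` K" unfolding m_def using finK False by simp
    then obtain q where qK: "q \<in> K" and qm: "dist c q = m" by blast
    have qmax: "\<forall>q'\<in>K. dist c q' \<le> dist c q" unfolding qm m_def using finK by simp
    have c1: "card (K - {q}) < card K" using finK qK by (meson card_Diff1_less)
    have s1: "K - {q} \<subseteq> KSet Col L Y c" using less.prems(1) by blast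
    have d1: "Dcl Col L Y c (K - {q})"
      unfolding Dcl_def
    proof (intro ballI impI)
      fix q1 q2 assume q1: "q1 \<in> K - {q}" and q2: "q2 \<in> KSet Col L Y c" and lt: "dist c q2 < dist c q1"
      have "q2 \<in> K" using less.prems(2) q1 q2 lt unfolding Dcl_def by blast
      moreover have "q2 \<noteq> q" using lt qmax q1 by force
      ultimately show "q2 \<in> K - {q}" by blast
    qed
    have IHK: "pconn (Pn Col L Y pr c (K - {q}))" using less.hyps[OF c1 s1 d1] .
    interpret stp2 Col L Y pr S e c K q
      by (unfold_locales) (use fin Lfin cvx aff cS dim hpr hnpr less.prems qK qmax IHQ in auto)
    show ?thesis using step[OF IHK] .
  qed
qed

lemma compact_GT:
  fixes Col :: "'c set" and L :: "'c \<Rightarrow> 'b set" and Y :: "'b \<Rightarrow> 'a::euclidean_space set"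
  assumes "hypG Col L Y pr S e" and cpt: "\<forall>i\<in>Col. \<forall>y\<in>L i. compact (Y y)"
    and IHQ: "\<forall>e'<e. \<forall>(Col'::'c set) (L'::'c \<Rightarrow> 'b set) (Y'::'b \<Rightarrow> 'a set) S'.
      hypG Col' L' Y' True S' e' \<longrightarrow> pconn (PP Col' L' Y' True)"
  shows "pconn (PP Col L Y pr)"
proof -
  have h: "finite Col" "\<forall>i\<in>Col. finite (L i) \<and> L i \<noteq> {}" "\<forall>i\<in>Col. \<forall>y\<in>L i. convex (Y y) \<and> Y y \<subseteq> S"
    "affine S" "S \<noteq> {}" "aff_dim S \<le> int e"
    "pr \<Longrightarrow> e + 3 \<le> card Col \<and> (\<forall>i\<in>Col. \<exists>y. L i = {y})"
    "\<not> pr \<Longrightarrow> e + 2 \<le> card Col \<and> (\<forall>i\<in>Col. \<Inter>(Y ` L i) = {})"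
    using assms(1) unfolding hypG_def by auto
  obtain c where cS: "c \<in> S" using h(5) by blast
  have cvx: "\<forall>i\<in>Col. \<forall>y\<in>L i. convex (Y y) \<and> compact (Y y) \<and> Y y \<subseteq> S" using h(3) cpt by blast
  have D: "Dcl Col L Y c (KSet Col L Y c)" unfolding Dcl_def by blast
  have "pconn (Pn Col L Y pr c (KSet Col L Y c))"
    using sweep[OF h(1,2) cvx h(4) cS h(6) h(7) h(8) IHQ order_refl D] by blast
  moreover have "Pn Col L Y pr c (KSet Col L Y c) = PP Col L Y pr"
    unfolding Pn_def NN_def PP_def KSet_def Om_def by blast
  ultimately show ?thesis by simp
qed

lemma reduce:
  fixes Y :: "'b \<Rightarrow> 'a::euclidean_space set"
  assumes "finite Lab" "\<forall>y\<in>Lab. convex (Y y)"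
  shows "\<exists>Y'. (\<forall>y\<in>Lab. convex (Y' y) \<and> compact (Y' y) \<and> Y' y \<subseteq> Y y) \<and>
              (\<forall>T\<subseteq>Lab. \<Inter>(Y' ` T) = {} \<longleftrightarrow> \<Inter>(Y ` T) = {})"
proof -
  define pt where "pt T = (SOME x. x \<in> \<Inter>(Y ` T))" for T
  define Y' where "Y' y = convex hull (pt ` {T. T \<subseteq> Lab \<and> y \<in> T \<and> \<Inter>(Y ` T) \<noteq> {}})" for y
  have ptin: "pt T \<in> \<Inter>(Y ` T)" if "\<Inter>(Y ` T) \<noteq> {}" for T
    unfolding pt_def by (rule someI_ex) (use that in blast)
  have fin: "finite {T. T \<subseteq> Lab \<and> y \<in> T \<and> \<Inter>(Y ` T) \<noteq> {}}" for y
  proof (rule finite_subset)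
    show "{T. T \<subseteq> Lab \<and> y \<in> T \<and> \<Inter>(Y ` T) \<noteq> {}} \<subseteq> Pow Lab" by blast
    show "finite (Pow Lab)" using assms(1) by simp
  qed
  have p1: "convex (Y' y) \<and> compact (Y' y) \<and> Y' y \<subseteq> Y y" if y: "y \<in> Lab" for y
  proof (intro conjI)
    show "convex (Y' y)" unfolding Y'_def by (rule convex_convex_hull)
    show "compact (Y' y)" unfolding Y'_def using fin[of y] by (intro finite_imp_compact_convex_hull) simp
    show "Y' y \<subseteq> Y y" unfolding Y'_def
    proof (rule hull_minimal)
      show "pt ` {T. T \<subseteq> Lab \<and> y \<in> T \<and> \<Inter> (Y ` T) \<noteq> {}} \<subseteq> Y y" using ptin by blast
      show "convex (Y y)" using assms(2) y by blast
    qed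
  qed
  have p2: "\<Inter>(Y' ` T) = {} \<longleftrightarrow> \<Inter>(Y ` T) = {}" if T: "T \<subseteq> Lab" for T
  proof
    assume a: "\<Inter>(Y' ` T) = {}"
    show "\<Inter>(Y ` T) = {}"
    proof (rule ccontr)
      assume ne: "\<Inter>(Y ` T) \<noteq> {}"
      have "pt T \<in> Y' y" if "y \<in> T" for y
        unfolding Y'_def using T that ne by (intro hull_inc) blast
      then show False using a by blast
    qed
  next
    assume a: "\<Inter>(Y ` T) = {}"
    then have "T \<noteq> {}" by auto
    have "\<Inter>(Y' ` T) \<subseteq> \<Inter>(Y ` T)"
    proof
      fix x assume x: "x \<in> \<Inter>(Y' ` T)"
      show "x \<in> \<Inter>(Y ` T)"
      proof (rule INT_I)
        fix y assume y: "y \<in> T"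
        then have "x \<in> Y' y" using x by blast
        moreover have "Y' y \<subseteq> Y y" using p1[of y] y T by blast
        ultimately show "x \<in> Y y" by blast
      qed
    qed
    then show "\<Inter>(Y' ` T) = {}" using a by simp
  qed
  show ?thesis using p1 p2 by blast
qed

lemma GT:
  fixes Col :: "'c set" and L :: "'c \<Rightarrow> 'b set" and Y :: "'b \<Rightarrow> 'a::euclidean_space set"
  shows "hypG Col L Y pr S e \<Longrightarrow> pconn (PP Col L Y pr)"
proof (induction e arbitrary: Col L Y pr S rule: less_induct)
  case (less e)
  have IHQ: "\<forall>e'<e. \<forall>(Col'::'c set) (L'::'c \<Rightarrow> 'b set) (Y'::'b \<Rightarrow> 'a set) S'.
      hypG Col' L' Y' True S' e' \<longrightarrow> pconn (PP Col' L' Y' True)" using less.IH by blast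
  have h: "finite Col" "\<forall>i\<in>Col. finite (L i) \<and> L i \<noteq> {}" "\<forall>i\<in>Col. \<forall>y\<in>L i. convex (Y y) \<and> Y y \<subseteq> S"
    using less.prems unfolding hypG_def by auto
  define Lab where "Lab = \<Union>(L ` Col)"
  have fL: "finite Lab" unfolding Lab_def using h(1,2) by simp
  have cL: "\<forall>y\<in>Lab. convex (Y y)" unfolding Lab_def using h(3) by blast
  obtain Y' where Y': "\<forall>y\<in>Lab. convex (Y' y) \<and> compact (Y' y) \<and> Y' y \<subseteq> Y y"
    "\<forall>T\<subseteq>Lab. \<Inter>(Y' ` T) = {} \<longleftrightarrow> \<Inter>(Y ` T) = {}" using reduce[OF fL cL] by blast
  have LLab: "L i \<subseteq> Lab" if "i \<in> Col" for i unfolding Lab_def using that by blast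
  have hp: "affine S" "S \<noteq> {}" "aff_dim S \<le> int e"
    "pr \<longrightarrow> e + 3 \<le> card Col \<and> (\<forall>i\<in>Col. \<exists>y. L i = {y})"
    "\<not> pr \<longrightarrow> e + 2 \<le> card Col \<and> (\<forall>i\<in>Col. \<Inter>(Y ` L i) = {})"
    using less.prems unfolding hypG_def by auto
  have ce: "\<Inter>(Y' ` L i) = {}" if "\<Inter>(Y ` L i) = {}" "i \<in> Col" for i
    using Y'(2) LLab[OF that(2)] that(1) by blast
  have hyp': "hypG Col L Y' pr S e"
    unfolding hypG_def
  proof (intro conjI)
    show "finite Col" by (rule h(1))
    show "\<forall>i\<in>Col. finite (L i) \<and> L i \<noteq> {}" by (rule h(2))
    show "\<forall>i\<in>Col. \<forall>y\<in>L i. convex (Y' y) \<and> Y' y \<subseteq> S" using Y'(1) h(3) LLab by blast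
    show "affine S" "S \<noteq> {}" "aff_dim S \<le> int e" using hp by auto
    show "pr \<longrightarrow> e + 3 \<le> card Col \<and> (\<forall>i\<in>Col. \<exists>y. L i = {y})" using hp by auto
    show "\<not> pr \<longrightarrow> e + 2 \<le> card Col \<and> (\<forall>i\<in>Col. \<Inter>(Y' ` L i) = {})" using hp(5) ce by blast
  qed
  have cpt: "\<forall>i\<in>Col. \<forall>y\<in>L i. compact (Y' y)" using Y' LLab by blast
  have "pconn (PP Col L Y' pr)" using compact_GT[OF hyp' cpt IHQ] .
  moreover have "PP Col L Y' pr = PP Col L Y pr"
  proof -
    have "Isec Y' f = {} \<longleftrightarrow> Isec Y f = {}" if "sel Col L f" for f
    proof -
      have "ran f \<subseteq> Lab"
      proof
        fix y assume "y \<in> ran f"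
        then obtain i where "f i = Some y" unfolding ran_def by blast
        then have "i \<in> Col" "y \<in> L i" using that unfolding sel_def by (auto simp: domI)
        then show "y \<in> Lab" unfolding Lab_def by blast
      qed
      then show ?thesis unfolding Isec_def using Y'(2) by blast
    qed
    then show ?thesis unfolding PP_def Om_def by blast
  qed
  ultimately show ?case by simp
qed

definition tosel :: "nat \<Rightarrow> 'x list \<Rightarrow> (nat \<Rightarrow> 'x option)" where
  "tosel n C = (\<lambda>i. if i < n then Some (C ! i) else None)"

definition Ext :: "nat \<Rightarrow> (nat \<Rightarrow> 'a set set) \<Rightarrow> (nat \<Rightarrow> 'a set option) \<Rightarrow> 'a set list set" where
  "Ext n F g = {E. rg_vertex n F E \<and> (\<forall>i y. g i = Some y \<longrightarrow> E ! i = y)}"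

lemma ran_dom2: "ran g = (\<lambda>i. the (g i)) ` dom g"
proof
  show "ran g \<subseteq> (\<lambda>i. the (g i)) ` dom g" unfolding ran_def dom_def by force
  show "(\<lambda>i. the (g i)) ` dom g \<subseteq> ran g" unfolding ran_def dom_def by force
qed

lemma inter_le_ran_eq:
  assumes "\<forall>i y. g i = Some y \<longrightarrow> E ! i = y"
  shows "\<Inter>(ran g) = (\<Inter>i\<in>dom g. E ! i)"
proof -
  have eq: "E ! i = the (g i)" if "i \<in> dom g" for i using assms that by auto
  have "(\<Inter>i\<in>dom g. E ! i) = (\<Inter>i\<in>dom g. the (g i))" by (rule INF_cong) (simp_all add: eq)
  then show ?thesis unfolding ran_dom2[of g] by simp
qed

lemma inter_le_ran:
  assumes "dom g \<subseteq> {..<n}" "\<forall>i y. g i = Some y \<longrightarrow> E ! i = y"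
  shows "(\<Inter>i\<in>{..<n}. E ! i) \<subseteq> \<Inter>(ran g)"
proof -
  have eq: "E ! i = the (g i)" if "i \<in> dom g" for i using assms(2) that by auto
  have "(\<Inter>i\<in>dom g. E ! i) = (\<Inter>i\<in>dom g. the (g i))" by (rule INF_cong) (simp_all add: eq)
  then have "\<Inter>(ran g) = (\<Inter>i\<in>dom g. E ! i)" unfolding ran_dom2[of g] by simp
  then show ?thesis using assms(1) by auto
qed

lemma toolA:
  fixes F :: "nat \<Rightarrow> 'a set set"
  assumes g: "sel {..<n} F g" "\<Inter>(ran g) = {}"
  shows "E1 \<in> Ext n F g \<Longrightarrow> E2 \<in> Ext n F g \<Longrightarrow> (rg_adj n F)\<^sup>*\<^sup>* E1 E2"
proof (induction "card {i. i < n \<and> E1 ! i \<noteq> E2 ! i}" arbitrary: E1 rule: less_induct)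
  case less
  have v1: "rg_vertex n F E1" and a1: "\<forall>i y. g i = Some y \<longrightarrow> E1 ! i = y" using less.prems(1) unfolding Ext_def by auto
  have v2: "rg_vertex n F E2" and a2: "\<forall>i y. g i = Some y \<longrightarrow> E2 ! i = y" using less.prems(2) unfolding Ext_def by auto
  have l1: "length E1 = n" and l2: "length E2 = n" using v1 v2 unfolding rg_vertex_def by auto
  have dg: "dom g \<subseteq> {..<n}" using g(1) unfolding sel_def by simp
  show ?case
  proof (cases "{i. i < n \<and> E1 ! i \<noteq> E2 ! i} = {}")
    case True
    then have "E1 = E2" using l1 l2 by (intro nth_equalityI) auto
    then show ?thesis by simp
  next
    case False
    then obtain j where j: "j < n" "E1 ! j \<noteq> E2 ! j" by blast
    have jg: "j \<notin> dom g"
    proof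
      assume "j \<in> dom g"
      then obtain y where "g j = Some y" by blast
      then show False using a1 a2 j by metis
    qed
    define E1' where "E1' = E1[j := E2 ! j]"
    have l1': "length E1' = n" unfolding E1'_def using l1 by simp
    have nth1': "E1' ! i = (if i = j then E2 ! j else E1 ! i)" if "i < n" for i
      unfolding E1'_def using that l1 by simp
    have a1': "\<forall>i y. g i = Some y \<longrightarrow> E1' ! i = y"
      using a1 jg nth1' dg by (metis domI lessThan_iff subsetD)
    have inF: "\<forall>i<n. E1' ! i \<in> F i" using nth1' v1 v2 unfolding rg_vertex_def by auto
    have em1: "(\<Inter>i\<in>{..<n}. E1' ! i) = {}" using inter_le_ran[OF dg a1'] g(2) by simp
    have v1': "rg_vertex n F E1'"
      unfolding rg_vertex_def using l1' inF em1 by simp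
    have sub: "dom g \<subseteq> {..<n} - {j}" using dg jg by blast
    have "(\<Inter>i\<in>{..<n} - {j}. E1 ! i) \<subseteq> (\<Inter>i\<in>dom g. E1 ! i)" using sub by auto
    moreover have "(\<Inter>i\<in>dom g. E1 ! i) = \<Inter>(ran g)"
      using inter_le_ran_eq[OF a1] by simp
    ultimately have oth: "(\<Inter>i\<in>{..<n} - {j}. E1 ! i) = {}" using g(2) by simp
    have diff: "i < n \<Longrightarrow> E1 ! i \<noteq> E1' ! i \<longleftrightarrow> i = j" for i using nth1' j by auto
    have ex1: "\<exists>!j'. j' < n \<and> E1 ! j' \<noteq> E1' ! j'"
    proof (rule ex1I[of _ j])
      show "j < n \<and> E1 ! j \<noteq> E1' ! j" using diff j(1) by simp
      show "\<And>j'. j' < n \<and> E1 ! j' \<noteq> E1' ! j' \<Longrightarrow> j' = j" using diff by blast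
    qed
    have al: "\<forall>j'<n. E1 ! j' \<noteq> E1' ! j' \<longrightarrow> (\<Inter>i\<in>{..<n} - {j'}. E1 ! i) = {}"
    proof (intro allI impI)
      fix j' assume "j' < n" "E1 ! j' \<noteq> E1' ! j'"
      then have "j' = j" using diff by blast
      then show "(\<Inter>i\<in>{..<n} - {j'}. E1 ! i) = {}" using oth by simp
    qed
    have adj: "rg_adj n F E1 E1'"
      unfolding rg_adj_def using v1 v1' ex1 al by simp
    let ?A = "{i. i < n \<and> E1 ! i \<noteq> E2 ! i}" and ?B = "{i. i < n \<and> E1' ! i \<noteq> E2 ! i}"
    have finA: "finite ?A" by (rule finite_subset[of _ "{..<n}"]) auto
    have "?B \<subseteq> ?A - {j}"
    proof
      fix x assume "x \<in> ?B"
      then have x: "x < n" "E1' ! x \<noteq> E2 ! x" by auto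
      show "x \<in> ?A - {j}"
      proof (cases "x = j")
        case True
        then show ?thesis using x nth1'[OF x(1)] by simp
      next
        case False
        then show ?thesis using x nth1'[OF x(1)] by simp
      qed
    qed
    then have "card ?B \<le> card (?A - {j})" using finA by (intro card_mono) auto
    moreover have "card (?A - {j}) < card ?A" using finA j by (intro card_Diff1_less) auto
    ultimately have "card ?B < card ?A" by simp
    moreover have "E1' \<in> Ext n F g" unfolding Ext_def using v1' a1' by blast
    ultimately have "(rg_adj n F)\<^sup>*\<^sup>* E1' E2" using less.hyps less.prems(2) by blast
    then show ?thesis using adj by (meson converse_rtranclp_into_rtranclp)
  qed
qed

lemma Ext_ne:
  fixes F :: "nat \<Rightarrow> 'a set set"
  assumes g: "sel {..<n} F g" "\<Inter>(ran g) = {}" and Fne: "\<forall>i<n. F i \<noteq> {}"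
  shows "\<exists>E. E \<in> Ext n F g"
proof -
  define h where "h = (\<lambda>i. case g i of Some y \<Rightarrow> y | None \<Rightarrow> (SOME x. x \<in> F i))"
  define E where "E = map h [0..<n]"
  have lE: "length E = n" unfolding E_def by simp
  have nE: "E ! i = (case g i of Some y \<Rightarrow> y | None \<Rightarrow> (SOME x. x \<in> F i))" if "i < n" for i
  proof -
    have "E ! i = h i" unfolding E_def using that by simp
    then show ?thesis unfolding h_def .
  qed
  have a: "\<forall>i y. g i = Some y \<longrightarrow> E ! i = y"
    using nE g(1) unfolding sel_def by (metis domI lessThan_iff option.simps(5) subsetD)
  have inF: "\<forall>i<n. E ! i \<in> F i"
  proof (intro allI impI)
    fix i assume i: "i < n"
    show "E ! i \<in> F i"
    proof (cases "g i")
      case None then show ?thesis using nE[OF i] Fne i by (simp add: some_in_eq)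
    next
      case (Some y) then show ?thesis using nE[OF i] g(1) unfolding sel_def by auto
    qed
  qed
  have dg: "dom g \<subseteq> {..<n}" using g(1) unfolding sel_def by simp
  have em: "(\<Inter>i\<in>{..<n}. E ! i) = {}" using inter_le_ran[OF dg a] g(2) by simp
  have "rg_vertex n F E" unfolding rg_vertex_def using lE inF em by simp
  then have "E \<in> Ext n F g" unfolding Ext_def using a by simp
  then show ?thesis by blast
qed

theorem theorem7p4:
  fixes F :: "nat \<Rightarrow> ('a::euclidean_space) set set" and n :: nat
  assumes "\<And>i. i < n \<Longrightarrow> finite (F i)"
    and "\<And>i C. i < n \<Longrightarrow> C \<in> F i \<Longrightarrow> convex C"
    and "\<And>i. i < n \<Longrightarrow> \<Inter>(F i) = {}"
    and "n \<ge> DIM('a) + 2"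
  shows "rg_connected n F"
proof -
  have Fne: "\<forall>i<n. F i \<noteq> {}"
  proof (intro allI impI notI)
    fix i assume "i < n" "F i = {}"
    then show False using assms(3)[of i] by simp
  qed
  have hyp: "hypG {..<n} F (id :: 'a set \<Rightarrow> 'a set) False UNIV DIM('a)"
    unfolding hypG_def
  proof (intro conjI)
    show "finite {..<n}" by simp
    show "\<forall>i\<in>{..<n}. finite (F i) \<and> F i \<noteq> {}" using assms(1) Fne by simp
    show "\<forall>i\<in>{..<n}. \<forall>y\<in>F i. convex (id y) \<and> id y \<subseteq> UNIV" using assms(2) by simp
    show "affine (UNIV :: 'a set)" by simp
    show "(UNIV :: 'a set) \<noteq> {}" by simp
    show "aff_dim (UNIV :: 'a set) \<le> int DIM('a)" by simp
    show "False \<longrightarrow> DIM('a) + 3 \<le> card {..<n} \<and> (\<forall>i\<in>{..<n}. \<exists>y. F i = {y})" by simp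
    show "\<not> False \<longrightarrow> DIM('a) + 2 \<le> card {..<n} \<and> (\<forall>i\<in>{..<n}. \<Inter>(id ` F i) = {})"
      using assms(3,4) by simp
  qed
  have pc: "pconn (PP {..<n} F (id :: 'a set \<Rightarrow> 'a set) False)" using GT[OF hyp] .
  have PPc: "g \<in> PP {..<n} F (id :: 'a set \<Rightarrow> 'a set) False \<longleftrightarrow> sel {..<n} F g \<and> \<Inter>(ran g) = {}" for g
    unfolding PP_def Om_def Isec_def by simp
  show ?thesis unfolding rg_connected_def
  proof (intro allI impI)
    fix C D assume CD: "rg_vertex n F C \<and> rg_vertex n F D"
    let ?P = "PP {..<n} F (id :: 'a set \<Rightarrow> 'a set) False"
    have ranto: "ran (tosel n X) = (\<lambda>i. X ! i) ` {..<n}" for X :: "'a set list"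
      unfolding ran_def tosel_def by (auto split: if_splits)
    have toP: "tosel n X \<in> ?P" if X: "rg_vertex n F X" for X
    proof -
      have "dom (tosel n X) \<subseteq> {..<n}" unfolding tosel_def dom_def by auto
      moreover have "\<forall>i y. tosel n X i = Some y \<longrightarrow> y \<in> F i"
      proof (intro allI impI)
        fix i y assume "tosel n X i = Some y"
        then have "i < n" "y = X ! i" unfolding tosel_def by (auto split: if_splits)
        then show "y \<in> F i" using X unfolding rg_vertex_def by simp
      qed
      ultimately have "sel {..<n} F (tosel n X)" unfolding sel_def by blast
      moreover have "\<Inter>(ran (tosel n X)) = {}" unfolding ranto using X unfolding rg_vertex_def by simp
      ultimately show ?thesis unfolding PPc by blast
    qed
    have extto: "Ext n F (tosel n X) = {X}" if "rg_vertex n F X" for X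
    proof
      show "Ext n F (tosel n X) \<subseteq> {X}"
      proof
        fix E assume "E \<in> Ext n F (tosel n X)"
        then have "rg_vertex n F E" "\<forall>i<n. E ! i = X ! i" unfolding Ext_def tosel_def by auto
        then show "E \<in> {X}" using that unfolding rg_vertex_def by (auto intro: nth_equalityI)
      qed
      show "{X} \<subseteq> Ext n F (tosel n X)" using that unfolding Ext_def tosel_def by auto
    qed
    have path: "(cedge ?P)\<^sup>*\<^sup>* (tosel n C) (tosel n D)" using pc toP CD unfolding pconn_def by blast
    have "(cedge ?P)\<^sup>*\<^sup>* (tosel n C) g \<Longrightarrow> (\<forall>E\<in>Ext n F g. (rg_adj n F)\<^sup>*\<^sup>* C E)" for g
    proof (induction rule: rtranclp_induct)
      case base
      then show ?case using extto CD by auto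
    next
      case (step g g')
      have gP: "g \<in> ?P" and g'P: "g' \<in> ?P" and cmp: "g \<subseteq>\<^sub>m g' \<or> g' \<subseteq>\<^sub>m g"
        using step(2) unfolding cedge_def by auto
      show ?case
      proof (cases "g \<subseteq>\<^sub>m g'")
        case True
        have "Ext n F g' \<subseteq> Ext n F g"
        proof
          fix E assume E: "E \<in> Ext n F g'"
          have "E ! i = y" if "g i = Some y" for i y
          proof -
            have "g' i = Some y" using True that unfolding map_le_def by (metis domI)
            then show ?thesis using E unfolding Ext_def by blast
          qed
          then show "E \<in> Ext n F g" using E unfolding Ext_def by blast
        qed
        then show ?thesis using step(3) by blast
      next
        case False
        then have le: "g' \<subseteq>\<^sub>m g" using cmp by blast
        have gs: "sel {..<n} F g" "\<Inter>(ran g) = {}" using gP PPc by auto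
        have gs': "sel {..<n} F g'" "\<Inter>(ran g') = {}" using g'P PPc by auto
        obtain E0 where E0: "E0 \<in> Ext n F g" using Ext_ne[OF gs Fne] by blast
        have "E0 ! i = y" if "g' i = Some y" for i y
        proof -
          have "g i = Some y" using le that unfolding map_le_def by (metis domI)
          then show ?thesis using E0 unfolding Ext_def by blast
        qed
        then have "E0 \<in> Ext n F g'" using E0 unfolding Ext_def by blast
        then have "(rg_adj n F)\<^sup>*\<^sup>* E0 E" if "E \<in> Ext n F g'" for E using toolA[OF gs'] that by blast
        moreover have "(rg_adj n F)\<^sup>*\<^sup>* C E0" using step(3) E0 by blast
        ultimately show ?thesis by (meson rtranclp_trans)
      qed
    qed
    then have "\<forall>E\<in>Ext n F (tosel n D). (rg_adj n F)\<^sup>*\<^sup>* C E" using path by blast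
    then show "(rg_adj n F)\<^sup>*\<^sup>* C D" using extto CD by blast
  qed
qed

end
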